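(* Consider the abstract problem $u'(t)=Au(t)+f(t)$, $0\le t\le T$, $u(0)=u_0$, $\partial u(t)=g(t)$ with $g\equiv 0$, together with the space semidiscretization $U_h'(t)=A_{h,0}U_h(t)+L_hf(t)$, $U_h(0)=L_hu(0)$, and its time integration by the exponential quadrature rule with $s$ nodes $$U_h^{n+1}=e^{kA_{h,0}}U_h^n+k\sum_{i,j=1}^s a_{i,j}\varphi_j(kA_{h,0})L_hf(t_n+c_ik),\qquad t_n=nk.$$ Let $\bar U_h^{n+1}$ be the result of one step of this scheme started from $U_h(t_n)$ instead of $U_h^n$, and set $\rho_{h,n+1}=U_h(t_{n+1})-\bar U_h^{n+1}$, $e_{h,n}=U_h(t_n)-U_h^n$. If $u\in C([0,T],Z)$ and $f\in C^s([0,T],X)$, then (i) $\rho_{h,n}=O(k^{s+1})$; (ii) $e_{h,n}=O(k^s)$; (iii) $L_hu(t_n)-U_h^n=O(k^s+\varepsilon_h)$, where the constants in the Landau notation are independent of $k$ and $h$ (norms being $\|\cdot\|_h$).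
   Context: $X$, $Y$ are complex Banach spaces, $A:D(A)\subset X\to X$ linear with $D(A)$ dense, $\partial:D(A)\to Y$ linear. Standing assumptions: (A1) $\partial$ is onto; (A2) $\mathrm{Ker}(\partial)$ is dense in $X$ and $A_0$, the restriction of $A$ to $D(A_0)=\mathrm{Ker}(\partial)$, generates a $C_0$-semigroup $e^{tA_0}$ of negative type $\omega$; (A3) for $\mathrm{Re}\,z>\omega$ and $v\in Y$ the problem $Ax=zx$, $\partial x=v$ has a unique solution $x=K(z)v$ with $\|K(z)v\|_X\le L\|v\|_Y$ uniformly for $\mathrm{Re}\,z>\omega_0>\omega$. The functions $\varphi_j$ are $\varphi_0(z)=e^z$, $\varphi_j(tB)=t^{-j}\int_0^te^{(t-\tau)B}\tau^{j-1}/(j-1)!\,d\tau$ ($j\ge1$). Given distinct nodes $c_1,\dots,c_s$, the coefficients $a_{i,j}$ are defined by writing the Lagrange basis polynomials as $l_i(\theta)=\sum_{j=1}^s a_{i,j}\theta^{j-1}/(j-1)!$. Space discretization: for $h$ in a sequence tending to $0$, $X_h\subset X$ is finite-dimensional with norm $\|\cdot\|_h$, $X_{h,0}\subset X_h$ a subspace; $A_{h,0}$ approximates $A_0$ on $X_{h,0}$, $A_h$ approximates $A$; $L_h:X\to X_{h,0}$ is a projection, $Q_h:Y\to X_h$, and for the elliptic problem $Aw=F$, $\partial w=g$ the elliptic projection $R_hw\in X_{h,0}$ satisfies $A_{h,0}R_hw+A_hQ_hg=L_hF$; $P_h=L_h-L_hQ_h\partial$. $Z\subset X$ is a subspace with norm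 $\|\cdot\|_Z$ and $\|A_{h,0}(R_h-P_h)u\|_h\le\varepsilon_h\|u\|_Z$ for $u\in Z$, with $\varepsilon_h$ decreasing with $h$. The operators $e^{tA_{h,0}}$ ($t\ge0$), $L_h$, $L_hQ_h$, $P_h$ are bounded uniformly in $h$ (part of the paper's standing spatial-discretization hypotheses). *)

theory Defs
  imports "HOL-Analysis.Analysis" "HOL-Computational_Algebra.Polynomial"
begin

text \<open>HOL has no class of complex vector spaces; we add complex scalar multiplication
  compatible with the real structure and the norm, on top of real Banach spaces.\<close>
class complex_banach = banach +
  fixes scaleC :: "complex \<Rightarrow> 'a \<Rightarrow> 'a"
  assumes scaleC_add_right: "scaleC a (x + y) = scaleC a x + scaleC a y"
    and scaleC_add_left: "scaleC (a + b) x = scaleC a x + scaleC b x"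
    and scaleC_scaleC: "scaleC a (scaleC b x) = scaleC (a * b) x"
    and scaleC_one: "scaleC 1 x = x"
    and scaleC_of_real: "scaleC (of_real r) x = scaleR r x"
    and norm_scaleC: "norm (scaleC a x) = cmod a * norm x"

definition csubspace_on :: "'a::complex_banach set \<Rightarrow> bool" where
  "csubspace_on S \<longleftrightarrow> 0 \<in> S \<and> (\<forall>x\<in>S. \<forall>y\<in>S. x + y \<in> S)
      \<and> (\<forall>c::complex. \<forall>x\<in>S. scaleC c x \<in> S)"

definition clinear_on :: "'a::complex_banach set \<Rightarrow> ('a \<Rightarrow> 'b::complex_banach) \<Rightarrow> bool" where
  "clinear_on S f \<longleftrightarrow> csubspace_on S \<and> (\<forall>x\<in>S. \<forall>y\<in>S. f (x + y) = f x + f y)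
      \<and> (\<forall>c::complex. \<forall>x\<in>S. f (scaleC c x) = scaleC c (f x))"

definition is_norm_on :: "'a::complex_banach set \<Rightarrow> ('a \<Rightarrow> real) \<Rightarrow> bool" where
  "is_norm_on S N \<longleftrightarrow> csubspace_on S \<and> (\<forall>x\<in>S. 0 \<le> N x \<and> (N x = 0 \<longleftrightarrow> x = 0))
      \<and> (\<forall>x\<in>S. \<forall>y\<in>S. N (x + y) \<le> N x + N y)
      \<and> (\<forall>c::complex. \<forall>x\<in>S. N (scaleC c x) = cmod c * N x)"

definition generates_C0_semigroup ::
  "('a::complex_banach \<Rightarrow> 'a) \<Rightarrow> 'a set \<Rightarrow> real \<Rightarrow> (real \<Rightarrow> 'a \<Rightarrow> 'a) \<Rightarrow> bool" where
  "generates_C0_semigroup A0 D0 \<omega> S \<longleftrightarrow>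
     (\<forall>t\<ge>0. bounded_linear (S t) \<and> (\<forall>c::complex. \<forall>x. S t (scaleC c x) = scaleC c (S t x)))
   \<and> S 0 = id
   \<and> (\<forall>t\<ge>0. \<forall>r\<ge>0. S (t + r) = S t \<circ> S r)
   \<and> (\<forall>x. continuous_on {0..} (\<lambda>t. S t x))
   \<and> (\<exists>M. \<forall>t\<ge>0. onorm (S t) \<le> M * exp (\<omega> * t))
   \<and> (\<forall>x. x \<in> D0 \<longleftrightarrow> (\<exists>y. ((\<lambda>t. (1 / t) *\<^sub>R (S t x - x)) \<longlongrightarrow> y) (at_right 0)))
   \<and> (\<forall>x\<in>D0. ((\<lambda>t. (1 / t) *\<^sub>R (S t x - x)) \<longlongrightarrow> A0 x) (at_right 0))"

definition standing_assumptions ::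
  "('x::complex_banach \<Rightarrow> 'x) \<Rightarrow> 'x set \<Rightarrow> ('x \<Rightarrow> 'y::complex_banach)
   \<Rightarrow> real \<Rightarrow> bool" where
  "standing_assumptions A D bd \<omega> \<longleftrightarrow>
     clinear_on D A \<and> clinear_on D bd \<and> closure D = UNIV
   \<comment> \<open>(A1)\<close>
   \<and> bd ` D = UNIV
   \<comment> \<open>(A2)\<close>
   \<and> closure {x\<in>D. bd x = 0} = UNIV \<and> \<omega> < 0
   \<and> (\<exists>S. generates_C0_semigroup A {x\<in>D. bd x = 0} \<omega> S)
   \<comment> \<open>(A3)\<close>
   \<and> (\<forall>z v. Re z > \<omega> \<longrightarrow> (\<exists>!x. x \<in> D \<and> A x = scaleC z x \<and> bd x = v))
   \<and> (\<exists>\<omega>0 L. \<omega>0 > \<omega> \<and> (\<forall>z v x. Re z > \<omega>0 \<longrightarrow> x \<in> D \<longrightarrow> A x = scaleC z x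
          \<longrightarrow> bd x = v \<longrightarrow> norm x \<le> L * norm v))"

definition Ck_on :: "nat \<Rightarrow> real \<Rightarrow> (real \<Rightarrow> 'a::real_normed_vector) \<Rightarrow> bool" where
  "Ck_on k T f \<longleftrightarrow> (\<exists>F. (\<forall>t\<in>{0..T}. F 0 t = f t)
     \<and> (\<forall>j<k. \<forall>t\<in>{0..T}. (F j has_vector_derivative F (Suc j) t) (at t within {0..T}))
     \<and> continuous_on {0..T} (F k))"

text \<open>e^{tB} x as the exponential series (B acts on a finite-dimensional invariant subspace).\<close>
definition opexp :: "('a::real_normed_vector \<Rightarrow> 'a) \<Rightarrow> real \<Rightarrow> 'a \<Rightarrow> 'a" where
  "opexp B t x = (\<Sum>n. (t ^ n / fact n) *\<^sub>R (B ^^ n) x)"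

definition phi :: "nat \<Rightarrow> ('a::real_normed_vector \<Rightarrow> 'a) \<Rightarrow> real \<Rightarrow> 'a \<Rightarrow> 'a" where
  "phi j B t x = (if j = 0 then opexp B t x
     else (1 / t ^ j) *\<^sub>R integral {0..t} (\<lambda>\<tau>. (\<tau> ^ (j - 1) / fact (j - 1)) *\<^sub>R opexp B (t - \<tau>) x))"

definition lagrange_basis :: "(nat \<Rightarrow> real) \<Rightarrow> nat \<Rightarrow> nat \<Rightarrow> real poly" where
  "lagrange_basis c s i = smult (1 / (\<Prod>m\<in>{1..s} - {i}. (c i - c m))) (\<Prod>m\<in>{1..s} - {i}. [:- c m, 1:])"

text \<open>l_i(\<theta>) = \<Sum>_j a_{i,j} \<theta>^{j-1}/(j-1)!\<close>
definition quad_coeff :: "(nat \<Rightarrow> real) \<Rightarrow> nat \<Rightarrow> nat \<Rightarrow> nat \<Rightarrow> real" where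
  "quad_coeff c s i j = fact (j - 1) * coeff (lagrange_basis c s i) (j - 1)"

definition eq_step :: "('a::real_normed_vector \<Rightarrow> 'a) \<Rightarrow> ('b \<Rightarrow> 'a) \<Rightarrow> (real \<Rightarrow> 'b)
    \<Rightarrow> (nat \<Rightarrow> real) \<Rightarrow> nat \<Rightarrow> real \<Rightarrow> real \<Rightarrow> 'a \<Rightarrow> 'a" where
  "eq_step B L f c s k t x = opexp B k x
     + k *\<^sub>R (\<Sum>i\<in>{1..s}. \<Sum>j\<in>{1..s}. quad_coeff c s i j *\<^sub>R phi j B k (L (f (t + c i * k))))"

primrec eq_iter :: "('a::real_normed_vector \<Rightarrow> 'a) \<Rightarrow> ('b \<Rightarrow> 'a) \<Rightarrow> (real \<Rightarrow> 'b)
    \<Rightarrow> (nat \<Rightarrow> real) \<Rightarrow> nat \<Rightarrow> real \<Rightarrow> 'a \<Rightarrow> nat \<Rightarrow> 'a" where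
  "eq_iter B L f c s k U0 0 = U0"
| "eq_iter B L f c s k U0 (Suc n) = eq_step B L f c s k (real n * k) (eq_iter B L f c s k U0 n)"

end

theory Submission
  imports Defs
begin


definition cbound :: "'a::real_normed_vector set \<Rightarrow> real \<Rightarrow> bool" where
  "cbound b c \<longleftrightarrow> (\<forall>a. (\<Sum>v\<in>b. \<bar>a v\<bar>) \<le> c * norm (\<Sum>v\<in>b. a v *\<^sub>R v))"

lemma cbound_nonneg:
  assumes "cbound b c" shows "cbound b (max c 0)"
  unfolding cbound_def
proof
  fix a
  have "(\<Sum>v\<in>b. \<bar>a v\<bar>) \<le> c * norm (\<Sum>v\<in>b. a v *\<^sub>R v)" using assms cbound_def by blast
  also have "\<dots> \<le> max c 0 * norm (\<Sum>v\<in>b. a v *\<^sub>R v)" by (intro mult_right_mono) auto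
  finally show "(\<Sum>v\<in>b. \<bar>a v\<bar>) \<le> max c 0 * norm (\<Sum>v\<in>b. a v *\<^sub>R v)" .
qed

lemma cbound_closed:
  fixes b :: "'a::banach set"
  assumes fin: "finite b" and cb: "cbound b c"
  shows "closed (span b)"
  unfolding closed_sequential_limits
proof (intro allI impI)
  fix x l assume H: "(\<forall>n. x n \<in> span b) \<and> x \<longlonglongrightarrow> l"
  then have "\<forall>n. \<exists>u. x n = (\<Sum>v\<in>b. u v *\<^sub>R v)" using span_finite[OF fin] by auto
  then obtain a where a: "\<And>n. x n = (\<Sum>v\<in>b. a n v *\<^sub>R v)" by metis
  have cx: "Cauchy x" using H convergent_Cauchy convergent_def by blast
  have cv: "convergent (\<lambda>n. a n v)" if "v \<in> b" for v
  proof -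
    have "Cauchy (\<lambda>n. a n v)"
    proof (rule metric_CauchyI)
      fix e :: real assume "e > 0"
      define e' where "e' = e / (max c 0 + 1)"
      have "e' > 0" using \<open>e>0\<close> by (simp add: e'_def)
      then obtain M where M: "\<And>m n. m \<ge> M \<Longrightarrow> n \<ge> M \<Longrightarrow> dist (x m) (x n) < e'"
        using cx metric_CauchyD by blast
      show "\<exists>M. \<forall>m\<ge>M. \<forall>n\<ge>M. dist (a m v) (a n v) < e"
      proof (intro exI allI impI)
        fix m n assume "m \<ge> M" "n \<ge> M"
        have "dist (a m v) (a n v) = \<bar>a m v - a n v\<bar>" by (simp add: dist_real_def)
        also have "\<dots> \<le> (\<Sum>w\<in>b. \<bar>a m w - a n w\<bar>)"
          using fin that by (intro member_le_sum) auto
        also have "\<dots> \<le> max c 0 * norm (\<Sum>w\<in>b. (a m w - a n w) *\<^sub>R w)"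
          using cbound_nonneg[OF cb] unfolding cbound_def by (erule_tac x="\<lambda>w. a m w - a n w" in allE) simp
        also have "(\<Sum>w\<in>b. (a m w - a n w) *\<^sub>R w) = x m - x n"
          by (simp add: a scaleR_diff_left sum_subtractf)
        also have "max c 0 * norm (x m - x n) \<le> max c 0 * e'"
          using M[OF \<open>m\<ge>M\<close> \<open>n\<ge>M\<close>] by (intro mult_left_mono) (auto simp: dist_norm)
        also have "\<dots> < e"
        proof -
          have "max c 0 * e' = e * (max c 0 / (max c 0 + 1))" by (simp add: e'_def)
          also have "\<dots> < e * 1" using \<open>e>0\<close> by (intro mult_strict_left_mono) auto
          finally show ?thesis by simp
        qed
        finally show "dist (a m v) (a n v) < e" .
      qed
    qed
    then show ?thesis using Cauchy_convergent_iff by blast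
  qed
  define \<alpha> where "\<alpha> v = lim (\<lambda>n. a n v)" for v
  have "(\<lambda>n. a n v) \<longlonglongrightarrow> \<alpha> v" if "v \<in> b" for v
    using cv[OF that] unfolding \<alpha>_def convergent_LIMSEQ_iff .
  then have "(\<lambda>n. \<Sum>v\<in>b. a n v *\<^sub>R v) \<longlonglongrightarrow> (\<Sum>v\<in>b. \<alpha> v *\<^sub>R v)"
    by (intro tendsto_sum tendsto_scaleR) auto
  moreover have "x = (\<lambda>n. \<Sum>v\<in>b. a n v *\<^sub>R v)" by (rule ext) (rule a)
  ultimately have "x \<longlonglongrightarrow> (\<Sum>v\<in>b. \<alpha> v *\<^sub>R v)" by simp
  then have "l = (\<Sum>v\<in>b. \<alpha> v *\<^sub>R v)" using H LIMSEQ_unique by blast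
  then show "l \<in> span b" using span_finite[OF fin] by auto
qed

lemma cbound_exists:
  fixes b :: "'a::banach set"
  assumes "finite b" "independent b"
  shows "\<exists>c. cbound b c"
  using assms
proof (induction b rule: finite_induct)
  case empty
  then show ?case by (auto simp: cbound_def)
next
  case (insert w b)
  have ib: "independent b" and wn: "w \<notin> span b"
    using insert.prems insert.hyps by (auto simp: independent_insert)
  obtain c0 where "cbound b c0" using insert.IH ib by blast
  then have cb: "cbound b (max c0 0)" by (rule cbound_nonneg)
  define c where "c = max c0 0"
  have c0: "c \<ge> 0" by (simp add: c_def)
  have cl: "closed (span b)" using cbound_closed[OF insert.hyps(1) cb] .
  define d where "d = infdist w (span b)"
  have dpos: "d > 0" unfolding d_def
    by (rule infdist_pos_not_in_closed[OF cl]) (use wn span_zero in auto)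
  show ?case
  proof (intro exI, unfold cbound_def, intro allI)
    fix a
    define y where "y = (\<Sum>v\<in>b. a v *\<^sub>R v)"
    define x where "x = (\<Sum>v\<in>insert w b. a v *\<^sub>R v)"
    have xy: "x = a w *\<^sub>R w + y" unfolding x_def y_def using insert.hyps by simp
    have yspan: "y \<in> span b" unfolding y_def by (intro span_sum span_scale span_base) auto
    have aw: "\<bar>a w\<bar> * d \<le> norm x"
    proof (cases "a w = 0")
      case True then show ?thesis by simp
    next
      case False
      have "- (1 / a w) *\<^sub>R y \<in> span b" using yspan by (intro span_scale span_neg) 
      then have "d \<le> dist w (- (1 / a w) *\<^sub>R y)" unfolding d_def by (rule infdist_le)
      also have "dist w (- (1 / a w) *\<^sub>R y) = norm ((1 / a w) *\<^sub>R x)"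
        using False by (simp add: dist_norm xy scaleR_add_right)
      also have "\<dots> = norm x / \<bar>a w\<bar>" by simp
      finally show ?thesis using False by (simp add: field_simps)
    qed
    have ny: "norm y \<le> norm x + \<bar>a w\<bar> * norm w"
    proof -
      have "y = x - a w *\<^sub>R w" by (simp add: xy)
      then have "norm y \<le> norm x + norm (a w *\<^sub>R w)" by (metis norm_triangle_ineq4)
      then show ?thesis by simp
    qed
    have aw2: "\<bar>a w\<bar> \<le> norm x / d" using aw dpos by (simp add: field_simps)
    have "(\<Sum>v\<in>insert w b. \<bar>a v\<bar>) = \<bar>a w\<bar> + (\<Sum>v\<in>b. \<bar>a v\<bar>)" using insert.hyps by simp
    also have "(\<Sum>v\<in>b. \<bar>a v\<bar>) \<le> c * norm y" using cb unfolding cbound_def y_def c_def by blast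
    also have "c * norm y \<le> c * (norm x + (norm x / d) * norm w)"
    proof (intro mult_left_mono[OF _ c0])
      have "\<bar>a w\<bar> * norm w \<le> (norm x / d) * norm w" using aw2 by (intro mult_right_mono) auto
      then show "norm y \<le> norm x + norm x / d * norm w" using ny by linarith
    qed
    also have "\<bar>a w\<bar> \<le> norm x / d" by (fact aw2)
    finally have "(\<Sum>v\<in>insert w b. \<bar>a v\<bar>) \<le> norm x / d + c * (norm x + norm x / d * norm w)"
      by simp
    also have "\<dots> = (1 / d + c * (1 + norm w / d)) * norm x" by (simp add: field_simps)
    finally show "(\<Sum>v\<in>insert w b. \<bar>a v\<bar>) \<le> (1 / d + c * (1 + norm w / d)) * norm (\<Sum>v\<in>insert w b. a v *\<^sub>R v)"
      unfolding x_def .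
  qed
qed

lemma fd_basis:
  fixes V :: "'a::banach set"
  assumes "subspace V" "finite B0" "V \<subseteq> span B0"
  obtains b c where "finite b" "b \<subseteq> V" "V = span b" "cbound b c" "c \<ge> 0"
proof -
  obtain b where b: "b \<subseteq> V" "independent b" "V \<subseteq> span b" by (rule maximal_independent_subset)
  have "b \<subseteq> span B0" using b assms by auto
  then have fb: "finite b" using independent_span_bound[OF assms(2) b(2)] by auto
  have "span b \<subseteq> V" using b(1) assms(1) by (rule span_minimal)
  then have Vb: "V = span b" using b by auto
  obtain c where "cbound b c" using cbound_exists[OF fb b(2)] by blast
  then have "cbound b (max c 0)" by (rule cbound_nonneg)
  then show ?thesis using that[OF fb b(1) Vb] by auto
qed

lemma fd_closed:
  fixes V :: "'a::banach set"
  assumes "subspace V" "finite B0" "V \<subseteq> span B0"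
  shows "closed V"
  using fd_basis[OF assms] cbound_closed by metis

lemma fd_sublinear_bound:
  fixes V :: "'a::banach set" and N :: "'a \<Rightarrow> real"
  assumes "subspace V" "finite B0" "V \<subseteq> span B0"
    and add: "\<And>x y. x \<in> V \<Longrightarrow> y \<in> V \<Longrightarrow> N (x + y) \<le> N x + N y"
    and hom: "\<And>r x. x \<in> V \<Longrightarrow> N (r *\<^sub>R x) = \<bar>r\<bar> * N x"
  shows "\<exists>K\<ge>0. \<forall>x\<in>V. N x \<le> K * norm x"
proof -
  obtain b c where b: "finite b" "b \<subseteq> V" "V = span b" "cbound b c" "c \<ge> 0"
    using fd_basis[OF assms(1-3)] by blast
  define M where "M = (\<Sum>v\<in>b. \<bar>N v\<bar>)"
  have M0: "M \<ge> 0" unfolding M_def by (simp add: sum_nonneg)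
  have sumle: "N (\<Sum>v\<in>S. a v *\<^sub>R v) \<le> (\<Sum>v\<in>S. \<bar>a v\<bar> * N v)" if "finite S" "S \<subseteq> V" for S a
    using that
  proof (induction S rule: finite_induct)
    case empty
    have "N 0 = \<bar>0\<bar> * N 0" using hom[of 0 0] assms(1) subspace_0 by fastforce
    then show ?case by simp
  next
    case (insert w S)
    have "(\<Sum>v\<in>S. a v *\<^sub>R v) \<in> V" using insert assms(1)
      by (intro subspace_sum) (auto intro: subspace_scale)
    moreover have "a w *\<^sub>R w \<in> V" using insert assms(1) subspace_scale by auto
    ultimately have "N (\<Sum>v\<in>insert w S. a v *\<^sub>R v) \<le> N (a w *\<^sub>R w) + N (\<Sum>v\<in>S. a v *\<^sub>R v)"
      using insert.hyps add by simp
    then show ?case using insert hom[of w "a w"] by simp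
  qed
  have "N x \<le> (M * c) * norm x" if "x \<in> V" for x
  proof -
    obtain a where xa: "x = (\<Sum>v\<in>b. a v *\<^sub>R v)" using \<open>x\<in>V\<close> b span_finite by blast
    have "N x \<le> (\<Sum>v\<in>b. \<bar>a v\<bar> * N v)" using sumle b xa by blast
    also have "\<dots> \<le> (\<Sum>v\<in>b. (\<Sum>w\<in>b. \<bar>a w\<bar>) * \<bar>N v\<bar>)"
    proof (intro sum_mono)
      fix v assume "v \<in> b"
      have "\<bar>a v\<bar> \<le> (\<Sum>w\<in>b. \<bar>a w\<bar>)" using b \<open>v\<in>b\<close> by (intro member_le_sum) auto
      then show "\<bar>a v\<bar> * N v \<le> (\<Sum>w\<in>b. \<bar>a w\<bar>) * \<bar>N v\<bar>"
      proof -
        have "\<bar>a v\<bar> * N v \<le> \<bar>a v\<bar> * \<bar>N v\<bar>" by (intro mult_left_mono) auto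
        also have "\<dots> \<le> (\<Sum>w\<in>b. \<bar>a w\<bar>) * \<bar>N v\<bar>" using \<open>\<bar>a v\<bar> \<le> _\<close> by (intro mult_right_mono) auto
        finally show ?thesis .
      qed
    qed
    also have "\<dots> = (\<Sum>w\<in>b. \<bar>a w\<bar>) * M" by (simp add: M_def sum_distrib_left)
    also have "\<dots> \<le> (c * norm x) * M"
      using b(4) M0 unfolding cbound_def xa by (intro mult_right_mono) auto
    finally show ?thesis by (simp add: algebra_simps)
  qed
  then show ?thesis using M0 b(5) by (intro exI[of _ "M * c"]) auto
qed

lemma fd_linear_bound:
  fixes V :: "'a::banach set" and T :: "'a \<Rightarrow> 'b::real_normed_vector"
  assumes "subspace V" "finite B0" "V \<subseteq> span B0"
    and add: "\<And>x y. x \<in> V \<Longrightarrow> y \<in> V \<Longrightarrow> T (x + y) = T x + T y"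
    and hom: "\<And>r x. x \<in> V \<Longrightarrow> T (r *\<^sub>R x) = r *\<^sub>R T x"
  shows "\<exists>K\<ge>0. \<forall>x\<in>V. norm (T x) \<le> K * norm x"
  by (rule fd_sublinear_bound[OF assms(1-3), of "\<lambda>x. norm (T x)"])
     (auto simp: add hom norm_triangle_ineq)


lemma summable_expbound:
  fixes K M :: real
  shows "summable (\<lambda>n. M * (R ^ n / fact n * K ^ n))"
proof -
  have "summable (\<lambda>n. inverse (fact n) * (R * K) ^ n)" by (rule summable_exp)
  then have "summable (\<lambda>n. (R * K) ^ n / fact n)" by (simp add: divide_inverse mult_ac)
  then have "summable (\<lambda>n. M * ((R * K) ^ n / fact n))" by (rule summable_mult)
  then show ?thesis by (simp add: power_mult_distrib mult_ac)
qed

lemma vps_summable: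
  fixes v :: "nat \<Rightarrow> 'a::banach"
  assumes v: "\<And>n. norm (v n) \<le> M * K ^ n" and K: "K \<ge> 0"
  shows "summable (\<lambda>n. norm ((t ^ n / fact n) *\<^sub>R v n))"
proof (rule summable_comparison_test[OF _ summable_expbound[of M "\<bar>t\<bar>" K]])
  show "\<exists>N. \<forall>n\<ge>N. norm (norm ((t ^ n / fact n) *\<^sub>R v n)) \<le> M * (\<bar>t\<bar> ^ n / fact n * K ^ n)"
  proof (intro exI allI impI)
    fix n :: nat
    have "norm (norm ((t ^ n / fact n) *\<^sub>R v n)) = (\<bar>t\<bar> ^ n / fact n) * norm (v n)"
      by (simp add: power_abs)
    also have "\<dots> \<le> (\<bar>t\<bar> ^ n / fact n) * (M * K ^ n)" by (intro mult_left_mono v) auto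
    finally show "norm (norm ((t ^ n / fact n) *\<^sub>R v n)) \<le> M * (\<bar>t\<bar> ^ n / fact n * K ^ n)"
      by (simp add: mult_ac)
  qed
qed

lemma vps_deriv:
  fixes v :: "nat \<Rightarrow> 'a::banach"
  assumes v: "\<And>n. norm (v n) \<le> M * K ^ n" and K: "K \<ge> 0"
  shows "((\<lambda>t. \<Sum>n. (t ^ n / fact n) *\<^sub>R v n) has_vector_derivative
           (\<Sum>n. (t ^ n / fact n) *\<^sub>R v (Suc n))) (at t)"
proof -
  define S where "S = ball t 1"
  define f where "f n x = (x ^ n / fact n) *\<^sub>R v n" for n x
  define Q where "Q x = (\<Sum>n. (x ^ n / fact n) *\<^sub>R v (Suc n))" for x
  define f' where "f' n x = (\<lambda>h::real. h *\<^sub>R (if n = 0 then 0 else (x ^ (n - 1) / fact (n - 1)) *\<^sub>R v n))" for n x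
  have v1: "norm (v (Suc n)) \<le> (M * K) * K ^ n" for n using v[of "Suc n"] by (simp add: mult_ac)
  have fd: "(f n has_derivative f' n x) (at x within S)" for n x
  proof (cases n)
    case 0 then show ?thesis by (simp add: f_def[abs_def] f'_def)
  next
    case (Suc m)
    have "((\<lambda>x. x ^ n / fact n) has_real_derivative (real n * x ^ (n - 1) / fact n)) (at x within S)"
      by (auto intro!: derivative_eq_intros)
    moreover have "real n * x ^ (n - 1) / fact n = x ^ (n - 1) / fact (n - 1)"
    proof -
      have "real (Suc m) * x ^ m / fact (Suc m) = x ^ m / fact m"
        by (simp only: fact_Suc) (simp del: of_nat_Suc)
      then show ?thesis using Suc by simp
    qed
    ultimately have "((\<lambda>x. x ^ n / fact n) has_real_derivative (x ^ (n - 1) / fact (n - 1))) (at x within S)"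
      by simp
    then have "((\<lambda>x. (x ^ n / fact n) *\<^sub>R v n) has_vector_derivative (x ^ (n - 1) / fact (n - 1)) *\<^sub>R v n) (at x within S)"
      by (rule bounded_linear.has_vector_derivative[OF bounded_linear_scaleR_left has_real_derivative_iff_has_vector_derivative[THEN iffD1]])
    then show ?thesis using Suc by (simp add: f_def[abs_def] f'_def has_vector_derivative_def)
  qed
  have unif: "uniform_limit S (\<lambda>n x. \<Sum>i<n. (x ^ i / fact i) *\<^sub>R v (Suc i)) Q sequentially"
    unfolding Q_def
  proof (rule Weierstrass_m_test[OF _ summable_expbound[of "M * K" "\<bar>t\<bar> + 1" K]])
    fix n x assume "x \<in> S"
    then have "\<bar>x\<bar> \<le> \<bar>t\<bar> + 1" by (auto simp: S_def dist_real_def)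
    have "norm ((x ^ n / fact n) *\<^sub>R v (Suc n)) = (\<bar>x\<bar> ^ n / fact n) * norm (v (Suc n))"
      by (simp add: power_abs)
    also have "\<dots> \<le> ((\<bar>t\<bar> + 1) ^ n / fact n) * ((M * K) * K ^ n)"
      using \<open>\<bar>x\<bar> \<le> _\<close> v1 by (intro mult_mono divide_right_mono power_mono) auto
    finally show "norm ((x ^ n / fact n) *\<^sub>R v (Suc n)) \<le> M * K * ((\<bar>t\<bar> + 1) ^ n / fact n * K ^ n)"
      by (simp add: mult_ac)
  qed
  have sumf': "(\<Sum>i<Suc n. f' i x h) = h *\<^sub>R (\<Sum>i<n. (x ^ i / fact i) *\<^sub>R v (Suc i))" for n x h
    unfolding f'_def by (simp add: sum.lessThan_Suc_shift scaleR_sum_right del: sum.lessThan_Suc)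
  have "\<exists>g. \<forall>x\<in>S. (\<lambda>n. f n x) sums (g x) \<and> (g has_derivative (\<lambda>h. h *\<^sub>R Q x)) (at x within S)"
  proof (rule has_derivative_series[where f' = f'])
    show "convex S" by (simp add: S_def)
    show "\<And>n x. x \<in> S \<Longrightarrow> (f n has_derivative f' n x) (at x within S)" by (rule fd)
    show "t \<in> S" by (simp add: S_def)
    show "(\<lambda>n. f n t) sums (\<Sum>n. f n t)"
      by (rule summable_sums, rule summable_norm_cancel, unfold f_def, rule vps_summable[OF v K])
    fix e :: real assume "e > 0"
    then have "\<forall>\<^sub>F n in sequentially. \<forall>x\<in>S. dist (\<Sum>i<n. (x ^ i / fact i) *\<^sub>R v (Suc i)) (Q x) < e"
      using unif unfolding uniform_limit_iff by blast
    then obtain N where N: "\<And>n x. n \<ge> N \<Longrightarrow> x \<in> S \<Longrightarrow> dist (\<Sum>i<n. (x ^ i / fact i) *\<^sub>R v (Suc i)) (Q x) < e"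
      unfolding eventually_sequentially by blast
    show "\<forall>\<^sub>F n in sequentially. \<forall>x\<in>S. \<forall>h. norm ((\<Sum>i<n. f' i x h) - h *\<^sub>R Q x) \<le> e * norm h"
      unfolding eventually_sequentially
    proof (intro exI[of _ "Suc N"] allI impI ballI)
      fix n x h assume "Suc N \<le> n" "x \<in> S"
      then obtain m where m: "n = Suc m" "m \<ge> N" by (cases n) auto
      have "norm ((\<Sum>i<n. f' i x h) - h *\<^sub>R Q x) = \<bar>h\<bar> * norm ((\<Sum>i<m. (x ^ i / fact i) *\<^sub>R v (Suc i)) - Q x)"
        unfolding m sumf' by (simp add: scaleR_diff_right[symmetric])
      also have "\<dots> \<le> \<bar>h\<bar> * e" using N[OF m(2) \<open>x\<in>S\<close>] by (intro mult_left_mono) (auto simp: dist_norm)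
      finally show "norm ((\<Sum>i<n. f' i x h) - h *\<^sub>R Q x) \<le> e * norm h" by (simp add: mult_ac)
    qed
  qed
  then obtain g where g: "\<And>x. x \<in> S \<Longrightarrow> (\<lambda>n. f n x) sums (g x) \<and> (g has_derivative (\<lambda>h. h *\<^sub>R Q x)) (at x within S)"
    by blast
  have "t \<in> S" "open S" by (auto simp: S_def)
  have d: "(g has_derivative (\<lambda>h. h *\<^sub>R Q t)) (at t)"
    using g[OF \<open>t\<in>S\<close>] at_within_open[OF \<open>t\<in>S\<close> \<open>open S\<close>] by simp
  have eq: "g y = (\<Sum>n. (y ^ n / fact n) *\<^sub>R v n)" if "y \<in> S" for y
  proof -
    have "(\<lambda>n. f n y) sums g y" using g[OF that] by blast
    then have "g y = suminf (\<lambda>n. f n y)" by (rule sums_unique)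
    then show ?thesis by (simp add: f_def)
  qed
  have "((\<lambda>y. \<Sum>n. (y ^ n / fact n) *\<^sub>R v n) has_derivative (\<lambda>h. h *\<^sub>R Q t)) (at t)"
    by (rule has_derivative_transform_within_open[OF d \<open>open S\<close> \<open>t\<in>S\<close>]) (rule eq)
  then show ?thesis unfolding has_vector_derivative_def Q_def .
qed


locale opV =
  fixes V :: "'a::banach set" and B :: "'a \<Rightarrow> 'a" and K :: real
  assumes sub: "subspace V" and clo: "closed V"
    and Badd: "\<And>x y. x \<in> V \<Longrightarrow> y \<in> V \<Longrightarrow> B (x + y) = B x + B y"
    and Bscale: "\<And>r x. x \<in> V \<Longrightarrow> B (r *\<^sub>R x) = r *\<^sub>R B x"
    and BV: "\<And>x. x \<in> V \<Longrightarrow> B x \<in> V"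
    and Kpos: "K \<ge> 0" and Bbd: "\<And>x. x \<in> V \<Longrightarrow> norm (B x) \<le> K * norm x"
begin

lemma V0: "0 \<in> V" using sub subspace_0 by blast
lemma Vadd: "x \<in> V \<Longrightarrow> y \<in> V \<Longrightarrow> x + y \<in> V" using sub subspace_add by blast
lemma Vscale: "x \<in> V \<Longrightarrow> r *\<^sub>R x \<in> V" using sub subspace_scale by blast
lemma Vdiff: "x \<in> V \<Longrightarrow> y \<in> V \<Longrightarrow> x - y \<in> V" using sub subspace_diff by blast
lemma Vneg: "x \<in> V \<Longrightarrow> - x \<in> V" using sub subspace_neg by blast
lemma Vsum: "finite S \<Longrightarrow> (\<And>i. i \<in> S \<Longrightarrow> f i \<in> V) \<Longrightarrow> sum f S \<in> V"
  using sub subspace_sum by blast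

lemma B0: "B 0 = 0"
  using Bscale[of 0 0] V0 by simp
lemma Bneg: "x \<in> V \<Longrightarrow> B (- x) = - B x"
  using Bscale[of x "-1"] by simp
lemma Bdiff: "x \<in> V \<Longrightarrow> y \<in> V \<Longrightarrow> B (x - y) = B x - B y"
  using Badd[of x "- y"] Bneg[of y] Vneg by simp

lemma powV: "x \<in> V \<Longrightarrow> (B ^^ n) x \<in> V"
  by (induction n) (auto simp: BV)
lemma powadd: "x \<in> V \<Longrightarrow> y \<in> V \<Longrightarrow> (B ^^ n) (x + y) = (B ^^ n) x + (B ^^ n) y"
  by (induction n) (auto simp: Badd powV)
lemma powscale: "x \<in> V \<Longrightarrow> (B ^^ n) (r *\<^sub>R x) = r *\<^sub>R (B ^^ n) x"
  by (induction n) (auto simp: Bscale powV)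
lemma powbd: "x \<in> V \<Longrightarrow> norm ((B ^^ n) x) \<le> K ^ n * norm x"
proof (induction n)
  case 0 then show ?case by simp
next
  case (Suc n)
  have "norm ((B ^^ Suc n) x) = norm (B ((B ^^ n) x))" by simp
  also have "\<dots> \<le> K * norm ((B ^^ n) x)" using Bbd powV Suc.prems by blast
  also have "\<dots> \<le> K * (K ^ n * norm x)" using Suc Kpos by (intro mult_left_mono) auto
  finally show ?case by (simp add: mult_ac)
qed

lemma powbd': "x \<in> V \<Longrightarrow> norm ((B ^^ n) x) \<le> norm x * K ^ n"
  using powbd by (simp add: mult_ac)

lemma E_summable_norm: assumes x: "x \<in> V" shows "summable (\<lambda>n. norm ((t ^ n / fact n) *\<^sub>R (B ^^ n) x))"
  by (rule vps_summable[OF powbd'[OF x] Kpos])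

lemma E_summable: "x \<in> V \<Longrightarrow> summable (\<lambda>n. (t ^ n / fact n) *\<^sub>R (B ^^ n) x)"
  by (rule summable_norm_cancel[OF E_summable_norm])

lemma closed_suminf: "summable f \<Longrightarrow> (\<And>n. f n \<in> V) \<Longrightarrow> suminf f \<in> V"
proof -
  assume s: "summable f" and fv: "\<And>n. f n \<in> V"
  have "(\<lambda>N. \<Sum>n<N. f n) \<longlonglongrightarrow> suminf f" using s by (rule summable_LIMSEQ)
  moreover have "\<forall>N. (\<Sum>n<N. f n) \<in> V" using fv by (auto intro: Vsum)
  ultimately show "suminf f \<in> V"
    using clo[unfolded closed_sequential_limits, rule_format, of "\<lambda>N. \<Sum>n<N. f n" "suminf f"] by simp
qed

lemma E_in: "x \<in> V \<Longrightarrow> opexp B t x \<in> V"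
  unfolding opexp_def by (rule closed_suminf[OF E_summable]) (auto intro: Vscale powV)

lemma E_bound: "x \<in> V \<Longrightarrow> norm (opexp B t x) \<le> exp (\<bar>t\<bar> * K) * norm x"
proof -
  assume x: "x \<in> V"
  have s2: "summable (\<lambda>n. norm x * ((\<bar>t\<bar> * K) ^ n / fact n))"
    using summable_expbound[of "norm x" "\<bar>t\<bar>" K] by (simp add: power_mult_distrib mult_ac)
  have "norm (opexp B t x) \<le> (\<Sum>n. norm ((t ^ n / fact n) *\<^sub>R (B ^^ n) x))"
    unfolding opexp_def by (rule summable_norm[OF E_summable_norm[OF x]])
  also have "\<dots> \<le> (\<Sum>n. norm x * ((\<bar>t\<bar> * K) ^ n / fact n))"
  proof (rule suminf_le[OF _ E_summable_norm[OF x] s2])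
    fix n
    have "norm ((t ^ n / fact n) *\<^sub>R (B ^^ n) x) = (\<bar>t\<bar> ^ n / fact n) * norm ((B ^^ n) x)"
      by (simp add: power_abs)
    also have "\<dots> \<le> (\<bar>t\<bar> ^ n / fact n) * (K ^ n * norm x)" using powbd[OF x] by (intro mult_left_mono) auto
    finally show "norm ((t ^ n / fact n) *\<^sub>R (B ^^ n) x) \<le> norm x * ((\<bar>t\<bar> * K) ^ n / fact n)"
      by (simp add: power_mult_distrib mult_ac)
  qed
  also have "\<dots> = norm x * exp (\<bar>t\<bar> * K)"
    using suminf_mult[OF summable_exp[of "\<bar>t\<bar> * K"], of "norm x"] by (simp add: exp_def divide_inverse mult_ac)
  finally show ?thesis by (simp add: mult_ac)
qed

lemma E_add: "x \<in> V \<Longrightarrow> y \<in> V \<Longrightarrow> opexp B t (x + y) = opexp B t x + opexp B t y"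
  unfolding opexp_def
  by (simp add: powadd scaleR_add_right suminf_add[OF E_summable E_summable])

lemma E_scale: "x \<in> V \<Longrightarrow> opexp B t (r *\<^sub>R x) = r *\<^sub>R opexp B t x"
proof -
  assume x: "x \<in> V"
  have "opexp B t (r *\<^sub>R x) = (\<Sum>n. r *\<^sub>R ((t ^ n / fact n) *\<^sub>R (B ^^ n) x))"
    unfolding opexp_def using x by (simp add: powscale scaleR_scaleR mult_ac)
  also have "\<dots> = r *\<^sub>R opexp B t x"
    unfolding opexp_def by (rule suminf_scaleR_right[OF E_summable[OF x], symmetric])
  finally show ?thesis .
qed

lemma E_neg: "x \<in> V \<Longrightarrow> opexp B t (- x) = - opexp B t x"
  using E_scale[where r="-1"] by simp
lemma E_diff: "x \<in> V \<Longrightarrow> y \<in> V \<Longrightarrow> opexp B t (x - y) = opexp B t x - opexp B t y"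
  using E_add[of x "- y"] E_neg[of y] Vneg by simp
lemma E_0: "opexp B t 0 = 0"
  using E_scale[where r=0 and x=0] V0 by simp

lemma E_sum: "finite S \<Longrightarrow> (\<And>i. i \<in> S \<Longrightarrow> f i \<in> V) \<Longrightarrow> opexp B t (sum f S) = (\<Sum>i\<in>S. opexp B t (f i))"
proof (induction S rule: finite_induct)
  case empty then show ?case by (simp add: E_0)
next
  case (insert a S)
  have "sum f S \<in> V" using insert by (intro Vsum) auto
  then show ?case using insert by (simp add: E_add)
qed

lemma E_time0: "opexp B 0 x = x"
proof -
  have "(\<lambda>n. (0 ^ n / fact n) *\<^sub>R (B ^^ n) x) = (\<lambda>n. if n = 0 then x else 0)"
    by (auto simp: power_0_left)
  then show ?thesis unfolding opexp_def by (simp add: sums_single[THEN sums_unique, symmetric])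
qed

lemma B_lim: "(\<And>n. X n \<in> V) \<Longrightarrow> X \<longlonglongrightarrow> l \<Longrightarrow> l \<in> V \<Longrightarrow> (\<lambda>n. B (X n)) \<longlonglongrightarrow> B l"
proof -
  assume XV: "\<And>n. X n \<in> V" and lim: "X \<longlonglongrightarrow> l" and l: "l \<in> V"
  have "(\<lambda>n. K * norm (X n - l)) \<longlonglongrightarrow> K * 0"
    using lim by (intro tendsto_mult tendsto_const) (simp add: LIM_zero_iff tendsto_norm_zero)
  then have lim0: "(\<lambda>n. K * norm (X n - l)) \<longlonglongrightarrow> 0" by simp
  have "(\<lambda>n. B (X n) - B l) \<longlonglongrightarrow> 0"
  proof (rule Lim_null_comparison[OF _ lim0])
    show "\<forall>\<^sub>F n in sequentially. norm (B (X n) - B l) \<le> K * norm (X n - l)"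
    proof (rule always_eventually, rule allI)
      fix n
      have "B (X n) - B l = B (X n - l)" using XV l Bdiff by simp
      then show "norm (B (X n) - B l) \<le> K * norm (X n - l)" using Bbd Vdiff XV l by simp
    qed
  qed
  then show ?thesis by (simp add: LIM_zero_iff)
qed

lemma E_comm: "x \<in> V \<Longrightarrow> B (opexp B t x) = opexp B t (B x)"
proof -
  assume x: "x \<in> V"
  let ?f = "\<lambda>n. (t ^ n / fact n) *\<^sub>R (B ^^ n) x"
  have "(\<lambda>N. \<Sum>n<N. ?f n) \<longlonglongrightarrow> opexp B t x"
    unfolding opexp_def by (rule summable_LIMSEQ[OF E_summable[OF x]])
  then have "(\<lambda>N. B (\<Sum>n<N. ?f n)) \<longlonglongrightarrow> B (opexp B t x)"
    by (rule B_lim[rotated]) (auto intro!: Vsum Vscale powV E_in x)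
  moreover have "B (\<Sum>n<N. ?f n) = (\<Sum>n<N. (t ^ n / fact n) *\<^sub>R (B ^^ n) (B x))" for N
  proof (induction N)
    case 0 then show ?case by (simp add: B0)
  next
    case (Suc N)
    have "B (\<Sum>n<Suc N. ?f n) = B (\<Sum>n<N. ?f n) + B (?f N)"
      by (simp del: funpow.simps) (rule Badd; auto intro!: Vsum Vscale powV x)
    also have "B (?f N) = (t ^ N / fact N) *\<^sub>R (B ^^ N) (B x)"
      by (simp add: Bscale powV x funpow_Suc_right[symmetric] del: funpow.simps)
        (simp add: funpow_swap1)
    finally show ?case using Suc by simp
  qed
  moreover have "(\<lambda>N. \<Sum>n<N. (t ^ n / fact n) *\<^sub>R (B ^^ n) (B x)) \<longlonglongrightarrow> opexp B t (B x)"
    unfolding opexp_def by (rule summable_LIMSEQ[OF E_summable[OF BV[OF x]]])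
  ultimately show ?thesis using LIMSEQ_unique by auto
qed

lemma E_deriv: "x \<in> V \<Longrightarrow> ((\<lambda>t. opexp B t x) has_vector_derivative opexp B t (B x)) (at t)"
proof -
  assume x: "x \<in> V"
  have "((\<lambda>t. \<Sum>n. (t ^ n / fact n) *\<^sub>R (B ^^ n) x) has_vector_derivative
           (\<Sum>n. (t ^ n / fact n) *\<^sub>R (B ^^ Suc n) x)) (at t)"
    by (rule vps_deriv[OF powbd'[OF x] Kpos])
  moreover have "(B ^^ Suc n) x = (B ^^ n) (B x)" for n by (simp add: funpow_swap1)
  ultimately show ?thesis unfolding opexp_def by simp
qed

lemma E_cont: "x \<in> V \<Longrightarrow> isCont (\<lambda>t. opexp B t x) t"
  using E_deriv has_vector_derivative_continuous by blast

end


context opV begin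

lemma E_prod_deriv:
  assumes U: "(U has_vector_derivative U') (at \<tau> within S)"
    and UV: "\<And>y. y \<in> S \<Longrightarrow> U y \<in> V" and tS: "\<tau> \<in> S" and U'V: "U' \<in> V"
    and \<sigma>: "(\<sigma> has_real_derivative \<sigma>') (at \<tau> within S)"
  shows "((\<lambda>y. opexp B (\<sigma> y) (U y)) has_vector_derivative
            (opexp B (\<sigma> \<tau>) U' + \<sigma>' *\<^sub>R opexp B (\<sigma> \<tau>) (B (U \<tau>)))) (at \<tau> within S)"
proof -
  have Ut: "U \<tau> \<in> V" using UV tS .
  have \<sigma>cont: "(\<sigma> \<longlongrightarrow> \<sigma> \<tau>) (at \<tau> within S)"
    using has_derivative_continuous[OF \<sigma>[unfolded has_field_derivative_def]] continuous_within by blast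
  have P1: "((\<lambda>y. opexp B (\<sigma> y) (U \<tau>)) has_vector_derivative \<sigma>' *\<^sub>R opexp B (\<sigma> \<tau>) (B (U \<tau>))) (at \<tau> within S)"
  proof -
    have "(\<sigma> has_vector_derivative \<sigma>') (at \<tau> within S)"
      using \<sigma> has_real_derivative_iff_has_vector_derivative by blast
    moreover have "((\<lambda>t. opexp B t (U \<tau>)) has_vector_derivative opexp B (\<sigma> \<tau>) (B (U \<tau>))) (at (\<sigma> \<tau>) within \<sigma> ` S)"
      by (rule has_vector_derivative_at_within[OF E_deriv[OF Ut]])
    ultimately have "((\<lambda>t. opexp B t (U \<tau>)) \<circ> \<sigma> has_vector_derivative \<sigma>' *\<^sub>R opexp B (\<sigma> \<tau>) (B (U \<tau>))) (at \<tau> within S)"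
      by (rule vector_diff_chain_within)
    then show ?thesis by (simp add: o_def)
  qed
  define G where "G y = opexp B (\<sigma> y) (U y - U \<tau>)" for y
  define D where "D = opexp B (\<sigma> \<tau>) U'"
  have P2: "(G has_vector_derivative D) (at \<tau> within S)"
    unfolding has_vector_derivative_def has_derivative_within
  proof (intro conjI)
    show "bounded_linear (\<lambda>h. h *\<^sub>R D)" by (rule bounded_linear_scaleR_left)
    have Ud: "((\<lambda>y. (1 / norm (y - \<tau>)) *\<^sub>R (U y - (U \<tau> + (y - \<tau>) *\<^sub>R U'))) \<longlongrightarrow> 0) (at \<tau> within S)"
      using U unfolding has_vector_derivative_def has_derivative_within by blast
    define a where "a y = norm ((1 / norm (y - \<tau>)) *\<^sub>R (U y - (U \<tau> + (y - \<tau>) *\<^sub>R U')))" for y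
    have a0: "(a \<longlongrightarrow> 0) (at \<tau> within S)"
      unfolding a_def using tendsto_norm_zero[OF Ud] .
    have ec: "((\<lambda>y. exp (\<bar>\<sigma> y\<bar> * K)) \<longlongrightarrow> exp (\<bar>\<sigma> \<tau>\<bar> * K)) (at \<tau> within S)"
      by (intro tendsto_intros \<sigma>cont)
    have t1: "((\<lambda>y. exp (\<bar>\<sigma> y\<bar> * K) * a y) \<longlongrightarrow> exp (\<bar>\<sigma> \<tau>\<bar> * K) * 0) (at \<tau> within S)"
      by (rule tendsto_mult[OF ec a0])
    have bc: "((\<lambda>y. opexp B (\<sigma> y) U') \<longlongrightarrow> opexp B (\<sigma> \<tau>) U') (at \<tau> within S)"
      by (rule isCont_tendsto_compose[OF E_cont[OF U'V] \<sigma>cont])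
    define b where "b y = norm (opexp B (\<sigma> y) U' - opexp B (\<sigma> \<tau>) U')" for y
    have b0: "(b \<longlongrightarrow> 0) (at \<tau> within S)"
      unfolding b_def using bc by (simp add: LIM_zero_iff tendsto_norm_zero)
    have sum0: "((\<lambda>y. exp (\<bar>\<sigma> y\<bar> * K) * a y + b y) \<longlongrightarrow> 0) (at \<tau> within S)"
      using tendsto_add[OF t1 b0] by simp
    show "((\<lambda>y. (1 / norm (y - \<tau>)) *\<^sub>R (G y - (G \<tau> + (y - \<tau>) *\<^sub>R D))) \<longlongrightarrow> 0) (at \<tau> within S)"
    proof (rule Lim_null_comparison[OF _ sum0])
      have "\<forall>\<^sub>F y in at \<tau> within S. y \<in> S" by (simp add: eventually_at_filter)
      then show "\<forall>\<^sub>F y in at \<tau> within S. norm ((1 / norm (y - \<tau>)) *\<^sub>R (G y - (G \<tau> + (y - \<tau>) *\<^sub>R D)))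
                  \<le> exp (\<bar>\<sigma> y\<bar> * K) * a y + b y"
      proof eventually_elim
        case (elim y)
        have Uy: "U y \<in> V" using UV elim .
        define W where "W = U y - (U \<tau> + (y - \<tau>) *\<^sub>R U')"
        have WV: "W \<in> V" unfolding W_def using Uy Ut U'V by (intro Vdiff Vadd Vscale)
        have Gt: "G \<tau> = 0" unfolding G_def by (simp add: E_0)
        have "U y - U \<tau> = W + (y - \<tau>) *\<^sub>R U'" unfolding W_def by simp
        then have "G y = opexp B (\<sigma> y) W + (y - \<tau>) *\<^sub>R opexp B (\<sigma> y) U'"
          unfolding G_def using WV U'V by (simp add: E_add E_scale Vscale)
        then have q: "G y - (G \<tau> + (y - \<tau>) *\<^sub>R D) = opexp B (\<sigma> y) W + (y - \<tau>) *\<^sub>R (opexp B (\<sigma> y) U' - opexp B (\<sigma> \<tau>) U')"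
          unfolding Gt D_def by (simp add: algebra_simps)
        show ?case
        proof (cases "y = \<tau>")
          case True
          have "0 \<le> exp (\<bar>\<sigma> y\<bar> * K) * a y + b y" unfolding a_def b_def by simp
          then show ?thesis using True by simp
        next
          case False
          then have np: "norm (y - \<tau>) > 0" by simp
          have "norm ((1 / norm (y - \<tau>)) *\<^sub>R (G y - (G \<tau> + (y - \<tau>) *\<^sub>R D)))
              \<le> norm ((1 / norm (y - \<tau>)) *\<^sub>R opexp B (\<sigma> y) W)
                + norm ((1 / norm (y - \<tau>)) *\<^sub>R ((y - \<tau>) *\<^sub>R (opexp B (\<sigma> y) U' - opexp B (\<sigma> \<tau>) U')))"
            unfolding q scaleR_add_right by (rule norm_triangle_ineq)
          also have "norm ((1 / norm (y - \<tau>)) *\<^sub>R ((y - \<tau>) *\<^sub>R (opexp B (\<sigma> y) U' - opexp B (\<sigma> \<tau>) U'))) = b y"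
            unfolding b_def using np by simp
          also have "norm ((1 / norm (y - \<tau>)) *\<^sub>R opexp B (\<sigma> y) W) = (1 / norm (y - \<tau>)) * norm (opexp B (\<sigma> y) W)"
            by simp
          also have "\<dots> \<le> (1 / norm (y - \<tau>)) * (exp (\<bar>\<sigma> y\<bar> * K) * norm W)"
            by (intro mult_left_mono E_bound WV) simp
          also have "\<dots> = exp (\<bar>\<sigma> y\<bar> * K) * a y"
            unfolding a_def W_def by simp
          finally show ?thesis by simp
        qed
      qed
    qed
  qed
  have "((\<lambda>y. opexp B (\<sigma> y) (U \<tau>) + G y) has_vector_derivative
          (\<sigma>' *\<^sub>R opexp B (\<sigma> \<tau>) (B (U \<tau>)) + D)) (at \<tau> within S)"
    by (rule has_vector_derivative_add[OF P1 P2])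
  then have "((\<lambda>y. opexp B (\<sigma> y) (U y)) has_vector_derivative
          (\<sigma>' *\<^sub>R opexp B (\<sigma> \<tau>) (B (U \<tau>)) + D)) (at \<tau> within S)"
  proof (rule has_vector_derivative_transform_within[OF _ zero_less_one tS])
    fix y assume "y \<in> S"
    then have "U y \<in> V" by (rule UV)
    have "U y = U \<tau> + (U y - U \<tau>)" by simp
    then show "opexp B (\<sigma> y) (U \<tau>) + G y = opexp B (\<sigma> y) (U y)"
      unfolding G_def using \<open>U y \<in> V\<close> Ut by (metis E_add Vdiff)
  qed
  then show ?thesis unfolding D_def by (simp add: add.commute)
qed

end


context opV begin

lemma E_shift_deriv: "x \<in> V \<Longrightarrow> ((\<lambda>s. opexp B (s + t) x) has_vector_derivative opexp B (s + t) (B x)) (at s within S)"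
proof -
  assume x: "x \<in> V"
  have "((\<lambda>s. s + t) has_vector_derivative 1) (at s within S)"
    using has_real_derivative_iff_has_vector_derivative by (auto intro!: derivative_eq_intros)
  moreover have "((\<lambda>r. opexp B r x) has_vector_derivative opexp B (s + t) (B x)) (at (s + t) within (\<lambda>s. s + t) ` S)"
    by (rule has_vector_derivative_at_within[OF E_deriv[OF x]])
  ultimately have "((\<lambda>r. opexp B r x) \<circ> (\<lambda>s. s + t) has_vector_derivative 1 *\<^sub>R opexp B (s + t) (B x)) (at s within S)"
    by (rule vector_diff_chain_within)
  then show ?thesis by (simp add: o_def)
qed

lemma E_inv: assumes x: "x \<in> V" shows "opexp B (- s) (opexp B (s + t) x) = opexp B t x"
proof -
  define W where "W s = opexp B (- s) (opexp B (s + t) x)" for s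
  have "((\<lambda>s. opexp B (- s) (opexp B (s + t) x)) has_vector_derivative
          (opexp B (- r) (opexp B (r + t) (B x)) + (-1) *\<^sub>R opexp B (- r) (B (opexp B (r + t) x)))) (at r within UNIV)"
    for r
    by (rule E_prod_deriv[OF E_shift_deriv[OF x]]) (auto intro!: derivative_eq_intros E_in x BV)
  then have "(W has_derivative (\<lambda>h. 0)) (at r within UNIV)" for r
    unfolding W_def has_vector_derivative_def using E_comm[OF x] by simp
  then obtain c where "\<forall>s\<in>UNIV. W s = c" using has_derivative_zero_constant[of UNIV W] by auto
  then have "W s = W 0" by simp
  then show ?thesis unfolding W_def by (simp add: E_time0)
qed

lemma E_semi: assumes x: "x \<in> V" shows "opexp B s (opexp B t x) = opexp B (s + t) x"
proof -
  define y where "y = opexp B s (opexp B t x) - opexp B (s + t) x"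
  have yV: "y \<in> V" unfolding y_def by (intro Vdiff E_in x)
  have "opexp B (- s) y = opexp B (- s) (opexp B (s + 0) (opexp B t x)) - opexp B (- s) (opexp B (s + t) x)"
    unfolding y_def by (simp add: E_diff E_in x)
  also have "\<dots> = 0" using E_inv[OF E_in[OF x], of s 0] E_inv[OF x, of s t] by (simp add: E_time0)
  finally have "opexp B (- s) y = 0" .
  moreover have "opexp B (- (- s)) (opexp B (- s + 0) y) = opexp B 0 y" by (rule E_inv[OF yV])
  ultimately have "y = 0" by (simp add: E_time0 E_0)
  then show ?thesis unfolding y_def by simp
qed

lemma E_voc:
  assumes ab: "a \<le> b" and UV: "\<And>\<tau>. \<tau> \<in> {a..b} \<Longrightarrow> U \<tau> \<in> V"
    and gV: "\<And>\<tau>. \<tau> \<in> {a..b} \<Longrightarrow> g \<tau> \<in> V"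
    and Ud: "\<And>\<tau>. \<tau> \<in> {a..b} \<Longrightarrow> (U has_vector_derivative (B (U \<tau>) + g \<tau>)) (at \<tau> within {a..b})"
  shows "((\<lambda>\<tau>. opexp B (b - \<tau>) (g \<tau>)) has_integral (U b - opexp B (b - a) (U a))) {a..b}"
proof -
  have "((\<lambda>\<tau>. opexp B (b - \<tau>) (U \<tau>)) has_vector_derivative opexp B (b - \<tau>) (g \<tau>)) (at \<tau> within {a..b})"
    if t: "\<tau> \<in> {a..b}" for \<tau>
  proof -
    have "((\<lambda>\<tau>. opexp B (b - \<tau>) (U \<tau>)) has_vector_derivative
        (opexp B (b - \<tau>) (B (U \<tau>) + g \<tau>) + (-1) *\<^sub>R opexp B (b - \<tau>) (B (U \<tau>)))) (at \<tau> within {a..b})"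
      by (rule E_prod_deriv[OF Ud[OF t] UV t]) (auto intro!: derivative_eq_intros Vadd BV UV gV t)
    moreover have "opexp B (b - \<tau>) (B (U \<tau>) + g \<tau>) = opexp B (b - \<tau>) (B (U \<tau>)) + opexp B (b - \<tau>) (g \<tau>)"
      by (intro E_add BV UV gV t)
    ultimately show ?thesis by simp
  qed
  from fundamental_theorem_of_calculus[OF ab this]
  show ?thesis by (simp add: E_time0)
qed

end


lemma lag_deg:
  assumes "i \<in> {1..s}"
  shows "degree (lagrange_basis c s i) \<le> s - 1"
proof -
  have "degree (lagrange_basis c s i) \<le> degree (\<Prod>m\<in>{1..s} - {i}. [:- c m, 1:])"
    unfolding lagrange_basis_def by (rule degree_smult_le)
  also have "\<dots> \<le> sum (degree \<circ> (\<lambda>m. [:- c m, 1:])) ({1..s} - {i})"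
    by (rule degree_prod_sum_le) simp
  also have "\<dots> = card ({1..s} - {i})" by simp
  also have "\<dots> = s - 1" using assms by simp
  finally show ?thesis .
qed

lemma lag_node:
  assumes inj: "inj_on c {1..s}" and i: "i \<in> {1..s}" and j: "j \<in> {1..s}"
  shows "poly (lagrange_basis c s i) (c j) = (if i = j then 1 else 0)"
proof (cases "i = j")
  case True
  have "(\<Prod>m\<in>{1..s} - {i}. (c i - c m)) \<noteq> 0"
  proof -
    have "c i - c m \<noteq> 0" if "m \<in> {1..s} - {i}" for m
      using inj i that by (auto dest: inj_onD)
    then show ?thesis by (simp add: prod_zero_iff)
  qed
  then show ?thesis using True unfolding lagrange_basis_def by (simp add: poly_prod)
next
  case False
  have "(\<Prod>m\<in>{1..s} - {i}. (c j - c m)) = 0"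
    using False j by (intro prod_zero) auto
  then show ?thesis using False unfolding lagrange_basis_def by (simp add: poly_prod)
qed

lemma lag_repr:
  assumes inj: "inj_on c {1..s}" and m: "m < s"
  shows "(\<Sum>i\<in>{1..s}. poly (lagrange_basis c s i) \<theta> * c i ^ m) = \<theta> ^ m"
proof -
  define P where "P = (\<Sum>i\<in>{1..s}. smult (c i ^ m) (lagrange_basis c s i)) - monom 1 m"
  have dP: "degree P \<le> s - 1"
  proof -
    have "degree (\<Sum>i\<in>{1..s}. smult (c i ^ m) (lagrange_basis c s i)) \<le> s - 1"
    proof (rule degree_sum_le)
      fix i assume "i \<in> {1..s}"
      show "degree (smult (c i ^ m) (lagrange_basis c s i)) \<le> s - 1"
        using degree_smult_le lag_deg[OF \<open>i \<in> {1..s}\<close>] order.trans by blast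
    qed simp
    moreover have "degree (monom (1::real) m) \<le> s - 1" using m by (simp add: degree_monom_eq)
    ultimately show ?thesis unfolding P_def using degree_diff_le by blast
  qed
  have root: "poly P (c j) = 0" if "j \<in> {1..s}" for j
  proof -
    have "(\<Sum>i\<in>{1..s}. c i ^ m * poly (lagrange_basis c s i) (c j)) = c j ^ m"
      using that by (simp add: lag_node[OF inj] if_distrib sum.delta cong: if_cong)
    then show ?thesis unfolding P_def by (simp add: poly_sum poly_monom)
  qed
  have "P = 0"
  proof (rule ccontr)
    assume "P \<noteq> 0"
    then have "card {x. poly P x = 0} \<le> degree P" by (rule card_poly_roots_bound)
    moreover have "c ` {1..s} \<subseteq> {x. poly P x = 0}" using root by auto
    moreover have "finite {x. poly P x = 0}" using poly_roots_finite[OF \<open>P \<noteq> 0\<close>] .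
    ultimately have "card (c ` {1..s}) \<le> s - 1" using dP card_mono by (metis order.trans)
    moreover have "card (c ` {1..s}) = s" using inj by (simp add: card_image)
    ultimately show False using m by simp
  qed
  then have "poly P \<theta> = 0" by simp
  then show ?thesis unfolding P_def by (simp add: poly_sum poly_monom mult_ac)
qed

lemma lag_bound:
  fixes p :: "real poly"
  assumes "\<theta> \<in> {0..1}"
  shows "\<bar>poly p \<theta>\<bar> \<le> (\<Sum>j\<le>degree p. \<bar>coeff p j\<bar>)"
proof -
  have "\<bar>poly p \<theta>\<bar> = \<bar>\<Sum>j\<le>degree p. coeff p j * \<theta> ^ j\<bar>" by (simp add: poly_altdef)
  also have "\<dots> \<le> (\<Sum>j\<le>degree p. \<bar>coeff p j * \<theta> ^ j\<bar>)" by (rule sum_abs)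
  also have "\<dots> \<le> (\<Sum>j\<le>degree p. \<bar>coeff p j\<bar>)"
  proof (rule sum_mono)
    fix j
    have "\<bar>\<theta> ^ j\<bar> \<le> 1" using assms by (simp add: power_le_one power_abs)
    then show "\<bar>coeff p j * \<theta> ^ j\<bar> \<le> \<bar>coeff p j\<bar>"
      by (simp add: abs_mult mult_left_le)
  qed
  finally show ?thesis .
qed


context opV begin

lemma E_cont_on: "y \<in> V \<Longrightarrow> continuous_on S (\<lambda>\<tau>. opexp B (k - \<tau>) y)"
proof -
  assume y: "y \<in> V"
  have "isCont (\<lambda>\<tau>. opexp B (k - \<tau>) y) \<tau>" for \<tau>
    by (rule isCont_o2[where f="\<lambda>\<tau>. k - \<tau>"]) (auto intro: E_cont y continuous_intros)
  then show ?thesis by (simp add: continuous_at_imp_continuous_on)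
qed

lemma quad_term:
  assumes k: "k > 0" and y: "y \<in> V" and j: "j \<ge> 1"
  shows "((\<lambda>\<tau>. (coeff p (j - 1) * (\<tau> / k) ^ (j - 1)) *\<^sub>R opexp B (k - \<tau>) y) has_integral
          k *\<^sub>R ((fact (j - 1) * coeff p (j - 1)) *\<^sub>R phi j B k y)) {0..k}"
proof -
  define g where "g \<tau> = (\<tau> ^ (j - 1) / fact (j - 1)) *\<^sub>R opexp B (k - \<tau>) y" for \<tau>
  have "continuous_on {0..k} g" unfolding g_def
    by (intro continuous_intros E_cont_on y) auto
  then have gi: "(g has_integral integral {0..k} g) {0..k}"
    using integrable_continuous_real integrable_integral by blast
  define r where "r = k * (fact (j - 1) * coeff p (j - 1)) * (1 / k ^ j)"
  have "((\<lambda>\<tau>. r *\<^sub>R g \<tau>) has_integral r *\<^sub>R integral {0..k} g) {0..k}"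
    by (rule has_integral_cmul[OF gi])
  moreover have "r *\<^sub>R g \<tau> = (coeff p (j - 1) * (\<tau> / k) ^ (j - 1)) *\<^sub>R opexp B (k - \<tau>) y" for \<tau>
  proof -
    obtain m where m: "j = Suc m" using j by (cases j) auto
    have "r * (\<tau> ^ (j - 1) / fact (j - 1)) = coeff p (j - 1) * (\<tau> / k) ^ (j - 1)"
      unfolding r_def m using k by (simp add: field_simps power_divide)
    then show ?thesis unfolding g_def by simp
  qed
  moreover have "r *\<^sub>R integral {0..k} g = k *\<^sub>R ((fact (j - 1) * coeff p (j - 1)) *\<^sub>R phi j B k y)"
    unfolding r_def phi_def g_def using j by simp
  ultimately show ?thesis by simp
qed

lemma eq_step_integral:
  assumes k: "k > 0" and x: "x \<in> V" and YV: "\<And>i. i \<in> {1..s} \<Longrightarrow> L (f (t + c i * k)) \<in> V"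
  shows "((\<lambda>\<tau>. \<Sum>i\<in>{1..s}. poly (lagrange_basis c s i) (\<tau> / k) *\<^sub>R opexp B (k - \<tau>) (L (f (t + c i * k))))
          has_integral (eq_step B L f c s k t x - opexp B k x)) {0..k}"
proof -
  let ?Y = "\<lambda>i. L (f (t + c i * k))"
  let ?l = "lagrange_basis c s"
  have "((\<lambda>\<tau>. \<Sum>i\<in>{1..s}. \<Sum>j\<in>{1..s}. (coeff (?l i) (j - 1) * (\<tau> / k) ^ (j - 1)) *\<^sub>R opexp B (k - \<tau>) (?Y i))
         has_integral (\<Sum>i\<in>{1..s}. \<Sum>j\<in>{1..s}. k *\<^sub>R ((fact (j - 1) * coeff (?l i) (j - 1)) *\<^sub>R phi j B k (?Y i)))) {0..k}"
    by (intro has_integral_sum finite_atLeastAtMost quad_term k YV) auto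
  moreover have inner: "(\<Sum>j\<in>{1..s}. (coeff (?l i) (j - 1) * (\<tau> / k) ^ (j - 1)) *\<^sub>R opexp B (k - \<tau>) (?Y i))
      = poly (?l i) (\<tau> / k) *\<^sub>R opexp B (k - \<tau>) (?Y i)" if "i \<in> {1..s}" for i \<tau>
  proof -
    have "(\<Sum>j\<in>{1..s}. coeff (?l i) (j - 1) * (\<tau> / k) ^ (j - 1)) = (\<Sum>j<s. coeff (?l i) j * (\<tau> / k) ^ j)"
    proof -
      have "(\<Sum>j\<in>{1..s}. coeff (?l i) (j - 1) * (\<tau> / k) ^ (j - 1)) = (\<Sum>j\<in>Suc ` {..<s}. coeff (?l i) (j - 1) * (\<tau> / k) ^ (j - 1))"
        by (simp only: image_Suc_lessThan)
      also have "\<dots> = (\<Sum>j<s. coeff (?l i) j * (\<tau> / k) ^ j)"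
        by (subst sum.reindex) auto
      finally show ?thesis .
    qed
    also have "\<dots> = poly (?l i) (\<tau> / k)"
    proof -
      have s1: "s \<ge> 1" using that by simp
      have d: "degree (?l i) \<le> s - 1" by (rule lag_deg[OF that])
      have "poly (?l i) (\<tau> / k) = (\<Sum>j\<le>degree (?l i). coeff (?l i) j * (\<tau> / k) ^ j)" by (rule poly_altdef)
      also have "\<dots> = (\<Sum>j<s. coeff (?l i) j * (\<tau> / k) ^ j)"
      proof (rule sum.mono_neutral_left)
        show "{..degree (?l i)} \<subseteq> {..<s}" using d s1 by auto
        show "\<forall>j\<in>{..<s} - {..degree (?l i)}. coeff (?l i) j * (\<tau> / k) ^ j = 0"
          by (auto simp: coeff_eq_0)
      qed auto
      finally show ?thesis by simp
    qed
    finally show ?thesis by (simp add: scaleR_sum_left[symmetric])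
  qed
  moreover have "(\<Sum>i\<in>{1..s}. \<Sum>j\<in>{1..s}. k *\<^sub>R ((fact (j - 1) * coeff (?l i) (j - 1)) *\<^sub>R phi j B k (?Y i)))
      = eq_step B L f c s k t x - opexp B k x"
    unfolding eq_step_def quad_coeff_def by (simp add: scaleR_sum_right)
  moreover have "(\<lambda>\<tau>. \<Sum>i\<in>{1..s}. \<Sum>j\<in>{1..s}. (coeff (?l i) (j - 1) * (\<tau> / k) ^ (j - 1)) *\<^sub>R opexp B (k - \<tau>) (?Y i))
     = (\<lambda>\<tau>. \<Sum>i\<in>{1..s}. poly (?l i) (\<tau> / k) *\<^sub>R opexp B (k - \<tau>) (?Y i))"
    by (rule ext, rule sum.cong[OF refl], rule inner)
  ultimately show ?thesis by simp
qed

end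


lemma taylor_rem:
  fixes F :: "nat \<Rightarrow> real \<Rightarrow> 'a::banach"
  assumes s: "s \<ge> 1"
    and D: "\<And>j t. j < s \<Longrightarrow> t \<in> {0..T} \<Longrightarrow> (F j has_vector_derivative F (Suc j) t) (at t within {0..T})"
    and MF: "\<And>t. t \<in> {0..T} \<Longrightarrow> norm (F s t) \<le> MF" and MF0: "MF \<ge> 0"
    and t: "t \<ge> 0" and tk: "t + k \<le> T" and \<sigma>: "\<sigma> \<in> {0..k}"
  shows "norm (F 0 (t + \<sigma>) - (\<Sum>m<s. (\<sigma> ^ m / fact m) *\<^sub>R F m t)) \<le> MF * k ^ s"
proof -
  have sub: "{t..t + \<sigma>} \<subseteq> {0..T}" using t tk \<sigma> by auto
  have D': "(F m has_vector_derivative F (Suc m) x) (at x within {t..t + \<sigma>})"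
    if "m < s" "t \<le> x" "x \<le> t + \<sigma>" for m x
  proof -
    have "x \<in> {0..T}" using sub that by auto
    then show ?thesis using has_vector_derivative_within_subset[OF D[OF that(1) \<open>x \<in> {0..T}\<close>] sub] by simp
  qed
  have ti: "((\<lambda>x. ((t + \<sigma> - x) ^ (s - 1) / fact (s - 1)) *\<^sub>R F s x) has_integral
      F 0 (t + \<sigma>) - (\<Sum>i<s. ((t + \<sigma> - t) ^ i / fact i) *\<^sub>R F i t)) {t..t + \<sigma>}"
    by (rule Taylor_has_integral[of s F "F 0" t "t + \<sigma>"]) (use s D' \<sigma> in auto)
  have bnd: "norm (((t + \<sigma> - x) ^ (s - 1) / fact (s - 1)) *\<^sub>R F s x) \<le> \<sigma> ^ (s - 1) * MF"
    if "x \<in> cbox t (t + \<sigma>)" for x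
  proof -
    have x: "t \<le> x" "x \<le> t + \<sigma>" using that by auto
    have "norm (((t + \<sigma> - x) ^ (s - 1) / fact (s - 1)) *\<^sub>R F s x)
        = ((t + \<sigma> - x) ^ (s - 1) / fact (s - 1)) * norm (F s x)" using x by simp
    also have "\<dots> \<le> \<sigma> ^ (s - 1) * MF"
    proof (rule mult_mono)
      have "(t + \<sigma> - x) ^ (s - 1) / fact (s - 1) \<le> (t + \<sigma> - x) ^ (s - 1)"
        using fact_ge_1[of "s - 1", where 'a=real] x by (simp add: divide_le_eq mult_le_cancel_left1)
      also have "\<dots> \<le> \<sigma> ^ (s - 1)" using x by (intro power_mono) auto
      finally show "(t + \<sigma> - x) ^ (s - 1) / fact (s - 1) \<le> \<sigma> ^ (s - 1)" .
      show "norm (F s x) \<le> MF" using MF sub x by auto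
    qed (use \<sigma> in auto)
    finally show ?thesis .
  qed
  have "norm (F 0 (t + \<sigma>) - (\<Sum>i<s. ((t + \<sigma> - t) ^ i / fact i) *\<^sub>R F i t))
      \<le> \<sigma> ^ (s - 1) * MF * Henstock_Kurzweil_Integration.content (cbox t (t + \<sigma>))"
    by (rule has_integral_bound[OF _ ti[unfolded box_real(2)[symmetric]] bnd]) (use \<sigma> MF0 in auto)
  also have "Henstock_Kurzweil_Integration.content (cbox t (t + \<sigma>)) = \<sigma>" using \<sigma> by simp
  also have "\<sigma> ^ (s - 1) * MF * \<sigma> = MF * \<sigma> ^ s" using s by (cases s) (auto simp: mult_ac)
  also have "\<dots> \<le> MF * k ^ s" using \<sigma> MF0 by (intro mult_left_mono power_mono) auto
  finally show ?thesis by simp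
qed

definition lagconst :: "(nat \<Rightarrow> real) \<Rightarrow> nat \<Rightarrow> real" where
  "lagconst c s = (\<Sum>i\<in>{1..s}. \<Sum>j\<le>degree (lagrange_basis c s i). \<bar>coeff (lagrange_basis c s i) j\<bar>)"

lemma interp_bound:
  fixes F :: "nat \<Rightarrow> real \<Rightarrow> 'a::banach"
  assumes s: "s \<ge> 1"
    and D: "\<And>j t. j < s \<Longrightarrow> t \<in> {0..T} \<Longrightarrow> (F j has_vector_derivative F (Suc j) t) (at t within {0..T})"
    and MF: "\<And>t. t \<in> {0..T} \<Longrightarrow> norm (F s t) \<le> MF" and MF0: "MF \<ge> 0"
    and inj: "inj_on c {1..s}" and cr: "c ` {1..s} \<subseteq> {0..1}"
    and k: "k > 0" and t: "t \<ge> 0" and tk: "t + k \<le> T" and \<tau>: "\<tau> \<in> {0..k}"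
  shows "norm (F 0 (t + \<tau>) - (\<Sum>i\<in>{1..s}. poly (lagrange_basis c s i) (\<tau> / k) *\<^sub>R F 0 (t + c i * k)))
          \<le> MF * (1 + lagconst c s) * k ^ s"
proof -
  define l where "l i = poly (lagrange_basis c s i) (\<tau> / k)" for i
  define P where "P \<sigma> = (\<Sum>m<s. (\<sigma> ^ m / fact m) *\<^sub>R F m t)" for \<sigma>
  define R where "R \<sigma> = F 0 (t + \<sigma>) - P \<sigma>" for \<sigma>
  have Rb: "norm (R \<sigma>) \<le> MF * k ^ s" if "\<sigma> \<in> {0..k}" for \<sigma>
    unfolding R_def P_def by (rule taylor_rem[OF s D MF MF0 t tk that])
  have ck: "c i * k \<in> {0..k}" if "i \<in> {1..s}" for i
  proof -
    have "c i \<in> c ` {1..s}" using that by (rule imageI)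
    then have "c i \<in> {0..1}" using cr by blast
    then show ?thesis using k by (auto simp: mult_le_cancel_right1)
  qed
  have repr: "(\<Sum>i\<in>{1..s}. l i *\<^sub>R P (c i * k)) = P \<tau>"
  proof -
    have "(\<Sum>i\<in>{1..s}. l i *\<^sub>R P (c i * k)) = (\<Sum>m<s. (\<Sum>i\<in>{1..s}. l i * (c i * k) ^ m / fact m) *\<^sub>R F m t)"
      unfolding P_def by (simp add: scaleR_sum_right scaleR_sum_left) (rule sum.swap)
    also have "\<dots> = (\<Sum>m<s. (\<tau> ^ m / fact m) *\<^sub>R F m t)"
    proof (rule sum.cong[OF refl])
      fix m assume "m \<in> {..<s}"
      then have "m < s" by simp
      have "(\<Sum>i\<in>{1..s}. l i * (c i * k) ^ m / fact m) = (\<Sum>i\<in>{1..s}. l i * c i ^ m) * k ^ m / fact m"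
        by (simp add: sum_distrib_right sum_distrib_left sum_divide_distrib power_mult_distrib mult_ac)
      also have "(\<Sum>i\<in>{1..s}. l i * c i ^ m) = (\<tau> / k) ^ m"
        unfolding l_def by (rule lag_repr[OF inj \<open>m < s\<close>])
      also have "(\<tau> / k) ^ m * k ^ m / fact m = \<tau> ^ m / fact m" using k by (simp add: power_divide)
      finally show "(\<Sum>i\<in>{1..s}. l i * (c i * k) ^ m / fact m) *\<^sub>R F m t = (\<tau> ^ m / fact m) *\<^sub>R F m t" by simp
    qed
    also have "\<dots> = P \<tau>" unfolding P_def ..
    finally show ?thesis .
  qed
  have "F 0 (t + \<tau>) - (\<Sum>i\<in>{1..s}. l i *\<^sub>R F 0 (t + c i * k))
      = R \<tau> - (\<Sum>i\<in>{1..s}. l i *\<^sub>R R (c i * k))"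
    unfolding R_def using repr by (simp add: scaleR_diff_right sum_subtractf)
  also have "norm \<dots> \<le> norm (R \<tau>) + norm (\<Sum>i\<in>{1..s}. l i *\<^sub>R R (c i * k))" by (rule norm_triangle_ineq4)
  also have "norm (\<Sum>i\<in>{1..s}. l i *\<^sub>R R (c i * k)) \<le> (\<Sum>i\<in>{1..s}. \<bar>l i\<bar> * (MF * k ^ s))"
  proof -
    have "norm (\<Sum>i\<in>{1..s}. l i *\<^sub>R R (c i * k)) \<le> (\<Sum>i\<in>{1..s}. norm (l i *\<^sub>R R (c i * k)))"
      by (rule norm_sum)
    also have "\<dots> \<le> (\<Sum>i\<in>{1..s}. \<bar>l i\<bar> * (MF * k ^ s))"
      by (rule sum_mono) (use Rb ck in \<open>auto intro: mult_left_mono\<close>)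
    finally show ?thesis .
  qed
  also have "(\<Sum>i\<in>{1..s}. \<bar>l i\<bar> * (MF * k ^ s)) \<le> lagconst c s * (MF * k ^ s)"
  proof -
    have "(\<Sum>i\<in>{1..s}. \<bar>l i\<bar>) \<le> lagconst c s"
      unfolding lagconst_def l_def
      by (rule sum_mono, rule lag_bound) (use \<tau> k in \<open>auto simp: divide_le_eq_1\<close>)
    then show ?thesis using MF0 k by (simp add: sum_distrib_right[symmetric] mult_right_mono)
  qed
  finally have "norm (F 0 (t + \<tau>) - (\<Sum>i\<in>{1..s}. l i *\<^sub>R F 0 (t + c i * k)))
      \<le> MF * k ^ s + lagconst c s * (MF * k ^ s)" using Rb[OF \<tau>] by linarith
  then show ?thesis unfolding l_def by (simp add: algebra_simps)
qed


lemma sublinear_sum: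
  fixes N :: "'a::real_normed_vector \<Rightarrow> real"
  assumes sub: "subspace W" and add: "\<And>x y. x \<in> W \<Longrightarrow> y \<in> W \<Longrightarrow> N (x + y) \<le> N x + N y"
    and N0: "N 0 = 0"
  shows "finite p \<Longrightarrow> (\<And>i. i \<in> p \<Longrightarrow> f i \<in> W) \<Longrightarrow> N (sum f p) \<le> (\<Sum>i\<in>p. N (f i))"
proof (induction p rule: finite_induct)
  case empty then show ?case by (simp add: N0)
next
  case (insert a p)
  have "sum f p \<in> W" using insert sub subspace_sum by blast
  then have "N (f a + sum f p) \<le> N (f a) + N (sum f p)" using insert add by simp
  then show ?case using insert by simp
qed

lemma N_integral_bound:
  fixes N :: "'a::banach \<Rightarrow> real" and g :: "real \<Rightarrow> 'a"
  assumes sub: "subspace W" and clo: "closed W"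
    and add: "\<And>x y. x \<in> W \<Longrightarrow> y \<in> W \<Longrightarrow> N (x + y) \<le> N x + N y"
    and hom: "\<And>r x. x \<in> W \<Longrightarrow> N (r *\<^sub>R x) = \<bar>r\<bar> * N x"
    and cb: "\<And>x. x \<in> W \<Longrightarrow> N x \<le> c * norm x"
    and gi: "(g has_integral I) {a..b}" and gW: "\<And>t. t \<in> {a..b} \<Longrightarrow> g t \<in> W"
    and gM: "\<And>t. t \<in> {a..b} \<Longrightarrow> N (g t) \<le> M" and ab: "a \<le> b"
  shows "N I \<le> M * (b - a)"
proof -
  have N0: "N 0 = 0" using hom[of 0 0] sub subspace_0 by fastforce
  have approx: "\<exists>S\<in>W. norm (S - I) < e \<and> N S \<le> M * (b - a)" if "e > 0" for e
  proof -
    obtain \<gamma> where \<gamma>: "gauge \<gamma>"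
      and close: "\<And>\<D>. \<D> tagged_division_of {a..b} \<Longrightarrow> \<gamma> fine \<D> \<Longrightarrow>
                 norm ((\<Sum>(x, k)\<in>\<D>. Henstock_Kurzweil_Integration.content k *\<^sub>R g x) - I) < e"
      using gi \<open>e>0\<close> unfolding has_integral_real by meson
    obtain p where p: "p tagged_division_of cbox a b" "\<gamma> fine p"
      using fine_division_exists[OF \<gamma>] by blast
    have p': "p tagged_division_of {a..b}" using p(1) by simp
    have fp: "finite p" using p' tagged_division_of_finite by blast
    have tag: "x \<in> {a..b}" if "(x, k) \<in> p" for x k
      using p' that tagged_division_ofD(2,3) by blast
    have kc: "Henstock_Kurzweil_Integration.content k \<ge> 0" for k :: "real set" by (rule content_pos_le) 
    define S where "S = (\<Sum>(x, k)\<in>p. Henstock_Kurzweil_Integration.content k *\<^sub>R g x)"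
    have termW: "(case xk of (x, k) \<Rightarrow> Henstock_Kurzweil_Integration.content k *\<^sub>R g x) \<in> W" if "xk \<in> p" for xk
      using that tag gW sub subspace_scale by (cases xk) fastforce
    have SW: "S \<in> W" unfolding S_def using termW fp sub subspace_sum by blast
    have "N S \<le> (\<Sum>xk\<in>p. N (case xk of (x, k) \<Rightarrow> Henstock_Kurzweil_Integration.content k *\<^sub>R g x))"
      unfolding S_def by (rule sublinear_sum[OF sub add N0 fp termW])
    also have "\<dots> \<le> (\<Sum>xk\<in>p. (case xk of (x, k) \<Rightarrow> Henstock_Kurzweil_Integration.content k) * M)"
    proof (rule sum_mono)
      fix xk assume "xk \<in> p"
      obtain x k where xk: "xk = (x, k)" by (cases xk)
      have "N (Henstock_Kurzweil_Integration.content k *\<^sub>R g x) = Henstock_Kurzweil_Integration.content k * N (g x)" using hom gW tag \<open>xk\<in>p\<close> xk kc by simp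
      also have "\<dots> \<le> Henstock_Kurzweil_Integration.content k * M" using gM tag \<open>xk\<in>p\<close> xk kc by (intro mult_left_mono) auto
      finally show "N (case xk of (x, k) \<Rightarrow> Henstock_Kurzweil_Integration.content k *\<^sub>R g x) \<le> (case xk of (x, k) \<Rightarrow> Henstock_Kurzweil_Integration.content k) * M"
        using xk by simp
    qed
    also have "\<dots> = (\<Sum>xk\<in>p. (case xk of (x, k) \<Rightarrow> Henstock_Kurzweil_Integration.content k)) * M" by (simp add: sum_distrib_right)
    also have "(\<Sum>xk\<in>p. (case xk of (x, k) \<Rightarrow> Henstock_Kurzweil_Integration.content k)) = Henstock_Kurzweil_Integration.content (cbox a b)"
      using additive_content_tagged_division[OF p(1)] by simp
    also have "Henstock_Kurzweil_Integration.content (cbox a b) = b - a" using ab by simp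
    finally have "N S \<le> M * (b - a)" by (simp add: mult_ac)
    moreover have "norm (S - I) < e" unfolding S_def using close[OF p' p(2)] .
    ultimately show ?thesis using SW by blast
  qed
  have IW: "I \<in> W"
  proof -
    have "I \<in> closure W"
      unfolding closure_approachable
    proof (intro allI impI)
      fix e :: real assume "e > 0"
      then obtain S where "S \<in> W" "norm (S - I) < e" using approx by blast
      then show "\<exists>y\<in>W. dist y I < e" by (auto simp: dist_norm)
    qed
    then show ?thesis using clo by simp
  qed
  show ?thesis
  proof (rule ccontr)
    assume "\<not> N I \<le> M * (b - a)"
    then have gap: "N I - M * (b - a) > 0" by simp
    define e where "e = (N I - M * (b - a)) / (\<bar>c\<bar> + 1)"
    have e0: "e > 0" unfolding e_def using gap by simp
    obtain S where S: "S \<in> W" "norm (S - I) < e" "N S \<le> M * (b - a)" using approx[OF e0] by blast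
    have "I = S + (I - S)" by simp
    then have "N I \<le> N S + N (I - S)" using add[OF S(1), of "I - S"] IW S(1) sub subspace_diff by metis
    also have "N (I - S) \<le> c * norm (I - S)" using cb IW S(1) sub subspace_diff by blast
    also have "c * norm (I - S) \<le> \<bar>c\<bar> * e"
    proof -
      have "c * norm (I - S) \<le> \<bar>c\<bar> * norm (I - S)" by (intro mult_right_mono) auto
      also have "\<dots> \<le> \<bar>c\<bar> * e" using S(2) by (intro mult_left_mono) (auto simp: norm_minus_commute)
      finally show ?thesis .
    qed
    finally have "N I \<le> M * (b - a) + \<bar>c\<bar> * e" using S(3) by simp
    moreover have "\<bar>c\<bar> * e < N I - M * (b - a)"
    proof -
      have "\<bar>c\<bar> * e = (N I - M * (b - a)) * (\<bar>c\<bar> / (\<bar>c\<bar> + 1))" unfolding e_def by simp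
      also have "\<dots> < (N I - M * (b - a)) * 1" using gap by (intro mult_strict_left_mono) auto
      finally show ?thesis by simp
    qed
    ultimately show False by simp
  qed
qed


lemma has_integral_closed_subspace:
  fixes g :: "real \<Rightarrow> 'a::banach"
  assumes sub: "subspace W" and clo: "closed W"
    and gi: "(g has_integral I) {a..b}" and gW: "\<And>t. t \<in> {a..b} \<Longrightarrow> g t \<in> W"
  shows "I \<in> W"
proof -
  have "I \<in> closure W"
    unfolding closure_approachable
  proof (intro allI impI)
    fix e :: real assume "e > 0"
    obtain \<gamma> where \<gamma>: "gauge \<gamma>"
      and close: "\<And>\<D>. \<D> tagged_division_of {a..b} \<Longrightarrow> \<gamma> fine \<D> \<Longrightarrow>
                 norm ((\<Sum>(x, k)\<in>\<D>. Henstock_Kurzweil_Integration.content k *\<^sub>R g x) - I) < e"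
      using gi \<open>e>0\<close> unfolding has_integral_real by meson
    obtain p where p: "p tagged_division_of cbox a b" "\<gamma> fine p"
      using fine_division_exists[OF \<gamma>] by blast
    have p': "p tagged_division_of {a..b}" using p(1) by simp
    have fp: "finite p" using p' tagged_division_of_finite by blast
    have tag: "x \<in> {a..b}" if "(x, k) \<in> p" for x k
      using p' that tagged_division_ofD(2,3) by blast
    define S where "S = (\<Sum>(x, k)\<in>p. Henstock_Kurzweil_Integration.content k *\<^sub>R g x)"
    have termW: "(case xk of (x, k) \<Rightarrow> Henstock_Kurzweil_Integration.content k *\<^sub>R g x) \<in> W" if "xk \<in> p" for xk
      using that tag gW sub subspace_scale by (cases xk) fastforce
    have SW: "S \<in> W" unfolding S_def using termW fp sub subspace_sum by blast
    have "norm (S - I) < e" unfolding S_def using close[OF p' p(2)] .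
    then show "\<exists>y\<in>W. dist y I < e" using SW by (auto simp: dist_norm)
  qed
  then show ?thesis using clo by simp
qed


locale perh = opV V B K for V :: "'a::banach set" and B K +
  fixes Xh :: "'a set" and N :: "'a \<Rightarrow> real" and L :: "'a \<Rightarrow> 'a" and C :: real and c' :: real
    and U :: "real \<Rightarrow> 'a" and f :: "real \<Rightarrow> 'a" and T :: real
    and s :: nat and c :: "nat \<Rightarrow> real" and F :: "nat \<Rightarrow> real \<Rightarrow> 'a" and MF :: real
  assumes Xsub: "subspace Xh" and Xclo: "closed Xh" and VXh: "V \<subseteq> Xh"
    and Nadd: "\<And>x y. x \<in> Xh \<Longrightarrow> y \<in> Xh \<Longrightarrow> N (x + y) \<le> N x + N y"
    and Nhom: "\<And>r x. x \<in> Xh \<Longrightarrow> N (r *\<^sub>R x) = \<bar>r\<bar> * N x"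
    and Nnorm: "\<And>x. x \<in> Xh \<Longrightarrow> N x \<le> c' * norm x"
    and Npos: "\<And>x. x \<in> Xh \<Longrightarrow> N x \<ge> 0"
    and Lbl: "bounded_linear L" and LV: "\<And>x. L x \<in> V" and C0: "C \<ge> 0"
    and EB: "\<And>t x. t \<ge> 0 \<Longrightarrow> x \<in> V \<Longrightarrow> N (opexp B t x) \<le> C * N x"
    and LB: "\<And>x. N (L x) \<le> C * norm x"
    and UV: "\<And>t. t \<in> {0..T} \<Longrightarrow> U t \<in> V"
    and Ud: "\<And>t. t \<in> {0..T} \<Longrightarrow> (U has_vector_derivative (B (U t) + L (f t))) (at t within {0..T})"
    and s1: "s \<ge> 1"
    and FD: "\<And>j t. j < s \<Longrightarrow> t \<in> {0..T} \<Longrightarrow> (F j has_vector_derivative F (Suc j) t) (at t within {0..T})"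
    and Ff: "\<And>t. t \<in> {0..T} \<Longrightarrow> F 0 t = f t"
    and MF: "\<And>t. t \<in> {0..T} \<Longrightarrow> norm (F s t) \<le> MF" and MF0: "MF \<ge> 0"
    and cinj: "inj_on c {1..s}" and cr: "c ` {1..s} \<subseteq> {0..1}"
begin

lemma N0: "N 0 = 0"
  using Nhom[of 0 0] Xsub subspace_0 by fastforce

lemma Llin: "linear L" using Lbl bounded_linear.linear by blast

definition Crho where "Crho = C * C * MF * (1 + lagconst c s)"

lemma lagconst_nonneg: "lagconst c s \<ge> 0"
  unfolding lagconst_def by (intro sum_nonneg) auto

lemma Crho_nonneg: "Crho \<ge> 0"
  unfolding Crho_def using C0 MF0 lagconst_nonneg by simp

lemma ci_range: "i \<in> {1..s} \<Longrightarrow> c i \<in> {0..1}"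
  using cr by blast

lemma rho_bound:
  assumes k: "k > 0" and t: "t \<ge> 0" and tk: "t + k \<le> T"
  shows "N (U (t + k) - eq_step B L f c s k t (U t)) \<le> Crho * k ^ (s + 1)"
proof -
  let ?l = "lagrange_basis c s"
  have sub: "{t..t + k} \<subseteq> {0..T}" using t tk by auto
  have Us: "((\<lambda>\<sigma>. U (t + \<sigma>)) has_vector_derivative (B (U (t + \<sigma>)) + L (f (t + \<sigma>)))) (at \<sigma> within {0..k})"
    if "\<sigma> \<in> {0..k}" for \<sigma>
  proof -
    have "((\<lambda>\<sigma>. t + \<sigma>) has_vector_derivative 1) (at \<sigma> within {0..k})"
      using has_real_derivative_iff_has_vector_derivative by (auto intro!: derivative_eq_intros)
    moreover have "(U has_vector_derivative (B (U (t + \<sigma>)) + L (f (t + \<sigma>)))) (at (t + \<sigma>) within (\<lambda>\<sigma>. t + \<sigma>) ` {0..k})"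
    proof -
      have img: "(\<lambda>\<sigma>. t + \<sigma>) ` {0..k} \<subseteq> {0..T}" using sub by auto
      have "t + \<sigma> \<in> {0..T}" using sub that by auto
      then show ?thesis using has_vector_derivative_within_subset[OF Ud img] by blast
    qed
    ultimately have "(U \<circ> (\<lambda>\<sigma>. t + \<sigma>) has_vector_derivative 1 *\<^sub>R (B (U (t + \<sigma>)) + L (f (t + \<sigma>)))) (at \<sigma> within {0..k})"
      by (rule vector_diff_chain_within)
    then show ?thesis by (simp add: o_def)
  qed
  have UsV: "U (t + \<sigma>) \<in> V" if "\<sigma> \<in> {0..k}" for \<sigma> using UV sub that by auto
  have voc: "((\<lambda>\<sigma>. opexp B (k - \<sigma>) (L (f (t + \<sigma>)))) has_integral (U (t + k) - opexp B k (U t))) {0..k}"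
    using E_voc[of 0 k "\<lambda>\<sigma>. U (t + \<sigma>)" "\<lambda>\<sigma>. L (f (t + \<sigma>))"] k UsV LV Us by simp
  have Ut: "U t \<in> V" using UV t tk k by auto
  have quad: "((\<lambda>\<sigma>. \<Sum>i\<in>{1..s}. poly (?l i) (\<sigma> / k) *\<^sub>R opexp B (k - \<sigma>) (L (f (t + c i * k))))
          has_integral (eq_step B L f c s k t (U t) - opexp B k (U t))) {0..k}"
    by (rule eq_step_integral[where L=L and f=f and t=t and c=c and s=s, OF k Ut LV])
  define g where "g \<sigma> = opexp B (k - \<sigma>) (L (f (t + \<sigma>))) - (\<Sum>i\<in>{1..s}. poly (?l i) (\<sigma> / k) *\<^sub>R opexp B (k - \<sigma>) (L (f (t + c i * k))))" for \<sigma>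
  have gi: "(g has_integral (U (t + k) - eq_step B L f c s k t (U t))) {0..k}"
    using has_integral_diff[OF voc quad] unfolding g_def by simp
  have gV: "g \<sigma> \<in> V" for \<sigma>
    unfolding g_def by (intro Vdiff Vsum Vscale E_in LV finite_atLeastAtMost)
  define w where "w \<sigma> = f (t + \<sigma>) - (\<Sum>i\<in>{1..s}. poly (?l i) (\<sigma> / k) *\<^sub>R f (t + c i * k))" for \<sigma>
  have gw: "g \<sigma> = opexp B (k - \<sigma>) (L (w \<sigma>))" for \<sigma>
  proof -
    have "L (w \<sigma>) = L (f (t + \<sigma>)) - (\<Sum>i\<in>{1..s}. poly (?l i) (\<sigma> / k) *\<^sub>R L (f (t + c i * k)))"
      unfolding w_def by (simp add: linear_diff[OF Llin] linear_sum[OF Llin] linear_scale[OF Llin])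
    also have "opexp B (k - \<sigma>) \<dots> = g \<sigma>"
      unfolding g_def by (simp add: E_diff E_sum E_scale Vsum Vscale LV)
    finally show ?thesis by simp
  qed
  have gM: "N (g \<sigma>) \<le> Crho * k ^ s" if "\<sigma> \<in> {0..k}" for \<sigma>
  proof -
    have "N (g \<sigma>) \<le> C * N (L (w \<sigma>))" unfolding gw using that by (intro EB LV) auto
    also have "\<dots> \<le> C * (C * norm (w \<sigma>))" using C0 LB by (intro mult_left_mono) auto
    also have "norm (w \<sigma>) \<le> MF * (1 + lagconst c s) * k ^ s"
    proof -
      have "w \<sigma> = F 0 (t + \<sigma>) - (\<Sum>i\<in>{1..s}. poly (?l i) (\<sigma> / k) *\<^sub>R F 0 (t + c i * k))"
      proof -
        have "F 0 (t + \<sigma>) = f (t + \<sigma>)" using Ff sub that by auto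
        moreover have "F 0 (t + c i * k) = f (t + c i * k)" if "i \<in> {1..s}" for i
        proof -
          have "c i \<in> {0..1}" using ci_range that .
          then have "c i * k \<le> k" "0 \<le> c i * k" using k by (auto simp: mult_le_cancel_right1)
          then have "t + c i * k \<in> {0..T}" using t tk by auto
          then show ?thesis by (rule Ff)
        qed
        ultimately show ?thesis unfolding w_def by simp
      qed
      also have "norm \<dots> \<le> MF * (1 + lagconst c s) * k ^ s"
        by (rule interp_bound[OF s1 FD MF MF0 cinj cr k t tk that])
      finally show ?thesis .
    qed
    then have "C * (C * norm (w \<sigma>)) \<le> C * (C * (MF * (1 + lagconst c s) * k ^ s))"
      using C0 by (intro mult_left_mono) auto
    finally show ?thesis unfolding Crho_def by (simp add: mult_ac)
  qed
  have "N (U (t + k) - eq_step B L f c s k t (U t)) \<le> Crho * k ^ s * (k - 0)"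
    by (rule N_integral_bound[OF Xsub Xclo Nadd Nhom Nnorm gi _ gM]) (use gV VXh k in auto)
  then show ?thesis by (simp add: mult_ac)
qed

lemma eq_step_in:
  assumes k: "k > 0" and x: "x \<in> V"
  shows "eq_step B L f c s k t x \<in> V"
proof -
  have "eq_step B L f c s k t x - opexp B k x \<in> V"
    by (rule has_integral_closed_subspace[OF sub clo eq_step_integral[where L=L and f=f and t=t and c=c and s=s, OF k x LV]])
       (intro Vsum Vscale E_in LV finite_atLeastAtMost)
  then have "(eq_step B L f c s k t x - opexp B k x) + opexp B k x \<in> V" by (intro Vadd E_in x)
  then show ?thesis by simp
qed

lemma eq_iter_in:
  assumes k: "k > 0" and x: "x \<in> V"
  shows "eq_iter B L f c s k x n \<in> V"
  by (induction n) (auto intro: eq_step_in k x)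

lemma err_bound:
  assumes k: "k > 0" and T0: "T \<ge> 0"
  shows "real n * k \<le> T \<Longrightarrow> (\<forall>j\<ge>0. N (opexp B j (U (real n * k) - eq_iter B L f c s k (U 0) n)) \<le> real n * (C * Crho * k ^ (s + 1)))"
proof (induction n)
  case 0
  then show ?case by (simp add: E_0 N0)
next
  case (Suc n)
  let ?e = "\<lambda>n. U (real n * k) - eq_iter B L f c s k (U 0) n"
  have nT: "real n * k \<le> T" using Suc.prems k by (simp add: ring_distribs)
  have U0: "U 0 \<in> V" using UV T0 by auto
  have Un: "U (real n * k) \<in> V" using UV nT k by auto
  have itV: "eq_iter B L f c s k (U 0) n \<in> V" by (rule eq_iter_in[OF k U0])
  have eV: "?e n \<in> V" using Un itV by (rule Vdiff)
  define \<rho> where "\<rho> = U (real n * k + k) - eq_step B L f c s k (real n * k) (U (real n * k))"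
  have \<rho>b: "N \<rho> \<le> Crho * k ^ (s + 1)" unfolding \<rho>_def
    by (rule rho_bound[OF k]) (use k nT Suc.prems in \<open>auto simp: ring_distribs\<close>)
  have \<rho>V: "\<rho> \<in> V" unfolding \<rho>_def
    using UV Suc.prems k by (intro Vdiff eq_step_in[OF k Un]) (auto simp: ring_distribs)
  have eS: "?e (Suc n) = \<rho> + opexp B k (?e n)"
  proof -
    have "?e (Suc n) = U (real n * k + k) - eq_step B L f c s k (real n * k) (eq_iter B L f c s k (U 0) n)"
      by (simp add: ring_distribs add.commute)
    also have "\<dots> = \<rho> + (eq_step B L f c s k (real n * k) (U (real n * k)) - eq_step B L f c s k (real n * k) (eq_iter B L f c s k (U 0) n))"
      unfolding \<rho>_def by simp
    also have "eq_step B L f c s k (real n * k) (U (real n * k)) - eq_step B L f c s k (real n * k) (eq_iter B L f c s k (U 0) n)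
        = opexp B k (U (real n * k)) - opexp B k (eq_iter B L f c s k (U 0) n)"
      unfolding eq_step_def by simp
    also have "\<dots> = opexp B k (?e n)" using Un itV by (simp add: E_diff)
    finally show ?thesis .
  qed
  show ?case
  proof (intro allI impI)
    fix j :: real assume j: "j \<ge> 0"
    have "opexp B j (?e (Suc n)) = opexp B j \<rho> + opexp B (j + k) (?e n)"
      unfolding eS using \<rho>V eV by (simp add: E_add E_in E_semi)
    then have "N (opexp B j (?e (Suc n))) \<le> N (opexp B j \<rho>) + N (opexp B (j + k) (?e n))"
      using Nadd VXh E_in \<rho>V eV by (metis subsetD)
    also have "N (opexp B j \<rho>) \<le> C * N \<rho>" using EB j \<rho>V by blast
    also have "C * N \<rho> \<le> C * (Crho * k ^ (s + 1))" using C0 \<rho>b by (intro mult_left_mono) auto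
    also have "N (opexp B (j + k) (?e n)) \<le> real n * (C * Crho * k ^ (s + 1))"
      using Suc.IH[OF nT] j k by auto
    finally show "N (opexp B j (?e (Suc n))) \<le> real (Suc n) * (C * Crho * k ^ (s + 1))"
      by (simp add: algebra_simps)
  qed
qed

lemma err_bound_final:
  assumes k: "k > 0" and T0: "T \<ge> 0" and nT: "real n * k \<le> T"
  shows "N (U (real n * k) - eq_iter B L f c s k (U 0) n) \<le> (C * Crho * T) * k ^ s"
proof -
  have "N (opexp B 0 (U (real n * k) - eq_iter B L f c s k (U 0) n)) \<le> real n * (C * Crho * k ^ (s + 1))"
    using err_bound[OF k T0 nT] by auto
  also have "real n * (C * Crho * k ^ (s + 1)) = (C * Crho * k ^ s) * (real n * k)" by (simp add: mult_ac)
  also have "\<dots> \<le> (C * Crho * k ^ s) * T" using nT C0 Crho_nonneg k by (intro mult_left_mono) auto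
  finally show ?thesis by (simp add: E_time0 mult_ac)
qed


lemma proj_err:
  fixes u :: "real \<Rightarrow> 'a" and A R :: "'a \<Rightarrow> 'a" and eps Mz :: real
  assumes uder: "\<And>t. t \<in> {0..T} \<Longrightarrow> (u has_vector_derivative (A (u t) + f t)) (at t within {0..T})"
    and LA: "\<And>t. t \<in> {0..T} \<Longrightarrow> L (A (u t)) = B (R (u t))"
    and RV: "\<And>t. t \<in> {0..T} \<Longrightarrow> R (u t) \<in> V"
    and Rest: "\<And>t. t \<in> {0..T} \<Longrightarrow> N (B (R (u t) - L (u t))) \<le> eps * Mz"
    and U0: "U 0 = L (u 0)"
    and t: "t \<in> {0..T}"
  shows "N (L (u t) - U t) \<le> C * (eps * Mz) * T"
proof -
  have T0: "0 \<in> {0..T}" using t by auto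
  have em: "eps * Mz \<ge> 0"
  proof -
    have "B (R (u 0) - L (u 0)) \<in> V" using RV[OF T0] LV by (intro BV Vdiff)
    then have "N (B (R (u 0) - L (u 0))) \<ge> 0" using Npos VXh by blast
    then show ?thesis using Rest[OF T0] by linarith
  qed
  define e where "e \<tau> = L (u \<tau>) - U \<tau>" for \<tau>
  define g where "g \<tau> = B (R (u \<tau>) - L (u \<tau>))" for \<tau>
  have sub: "{0..t} \<subseteq> {0..T}" using t by auto
  have eV: "e \<tau> \<in> V" if "\<tau> \<in> {0..T}" for \<tau> unfolding e_def using that LV UV by (intro Vdiff)
  have gV: "g \<tau> \<in> V" if "\<tau> \<in> {0..T}" for \<tau> unfolding g_def using that LV RV by (intro BV Vdiff)
  have ed: "(e has_vector_derivative (B (e \<tau>) + g \<tau>)) (at \<tau> within {0..T})" if tau: "\<tau> \<in> {0..T}" for \<tau>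
  proof -
    have "((\<lambda>\<tau>. L (u \<tau>)) has_vector_derivative L (A (u \<tau>) + f \<tau>)) (at \<tau> within {0..T})"
      by (rule bounded_linear.has_vector_derivative[OF Lbl uder[OF tau]])
    then have "(e has_vector_derivative (L (A (u \<tau>) + f \<tau>) - (B (U \<tau>) + L (f \<tau>)))) (at \<tau> within {0..T})"
      unfolding e_def by (rule has_vector_derivative_diff[OF _ Ud[OF tau]])
    moreover have "L (A (u \<tau>) + f \<tau>) - (B (U \<tau>) + L (f \<tau>)) = B (e \<tau>) + g \<tau>"
    proof -
      have "L (A (u \<tau>) + f \<tau>) - (B (U \<tau>) + L (f \<tau>)) = B (R (u \<tau>)) - B (U \<tau>)"
        using LA[OF tau] by (simp add: linear_add[OF Llin])
      also have "\<dots> = B (e \<tau>) + g \<tau>"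
        unfolding e_def g_def using LV RV[OF tau] UV[OF tau] by (simp add: Bdiff)
      finally show ?thesis .
    qed
    ultimately show ?thesis by simp
  qed
  have vi: "((\<lambda>\<tau>. opexp B (t - \<tau>) (g \<tau>)) has_integral (e t - opexp B (t - 0) (e 0))) {0..t}"
  proof (rule E_voc)
    show "0 \<le> t" using t by auto
    show "\<And>\<tau>. \<tau> \<in> {0..t} \<Longrightarrow> e \<tau> \<in> V" using eV sub by blast
    show "\<And>\<tau>. \<tau> \<in> {0..t} \<Longrightarrow> g \<tau> \<in> V" using gV sub by blast
    show "\<And>\<tau>. \<tau> \<in> {0..t} \<Longrightarrow> (e has_vector_derivative B (e \<tau>) + g \<tau>) (at \<tau> within {0..t})"
      using ed sub has_vector_derivative_within_subset by blast
  qed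
  have e0: "e 0 = 0" unfolding e_def using U0 by simp
  have vi': "((\<lambda>\<tau>. opexp B (t - \<tau>) (g \<tau>)) has_integral e t) {0..t}"
    using vi by (simp add: e0 E_0)
  have "N (e t) \<le> (C * (eps * Mz)) * (t - 0)"
  proof (rule N_integral_bound[OF Xsub Xclo Nadd Nhom Nnorm vi'])
    fix \<tau> assume tau: "\<tau> \<in> {0..t}"
    then have tT: "\<tau> \<in> {0..T}" using sub by blast
    show "opexp B (t - \<tau>) (g \<tau>) \<in> Xh" using E_in gV[OF tT] VXh by blast
    have "N (opexp B (t - \<tau>) (g \<tau>)) \<le> C * N (g \<tau>)" using EB tau gV[OF tT] by auto
    also have "\<dots> \<le> C * (eps * Mz)" using C0 Rest[OF tT] unfolding g_def by (intro mult_left_mono) auto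
    finally show "N (opexp B (t - \<tau>) (g \<tau>)) \<le> C * (eps * Mz)" .
  next
    show "0 \<le> t" using t by auto
  qed
  also have "\<dots> \<le> C * (eps * Mz) * T" using t C0 em by (intro mult_left_mono) auto
  finally show ?thesis unfolding e_def .
qed


lemma rho_bound':
  assumes "k > 0" "t \<ge> 0" "t + k \<le> T"
  shows "N (U (t + k) - eq_step B L f c s k t (U t)) \<le> C * C * MF * (1 + lagconst c s) * k ^ (s + 1)"
  using rho_bound[OF assms] unfolding Crho_def .

lemma err_bound_final':
  assumes "k > 0" "T \<ge> 0" "real n * k \<le> T"
  shows "N (U (real n * k) - eq_iter B L f c s k (U 0) n) \<le> (C * (C * C * MF * (1 + lagconst c s)) * T) * k ^ s"
  using err_bound_final[OF assms] unfolding Crho_def .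

lemma eq_iter_zero:
  assumes f0: "\<And>t. t \<in> {0..T} \<Longrightarrow> f t = 0" and k: "k > 0"
  shows "real n * k \<le> T \<Longrightarrow> eq_iter B L f c s k 0 n = 0"
proof (induction n)
  case 0 then show ?case by simp
next
  case (Suc n)
  have nT: "real n * k \<le> T" using Suc.prems k by (simp add: ring_distribs)
  have fz: "f (real n * k + c i * k) = 0" if "i \<in> {1..s}" for i
  proof -
    have "c i \<in> {0..1}" using ci_range that .
    then have "c i * k \<le> k" "0 \<le> c i * k" using k by (auto simp: mult_le_cancel_right1)
    moreover have "0 \<le> real n * k" using k by simp
    ultimately have "real n * k + c i * k \<in> {0..T}" using Suc.prems by (auto simp: ring_distribs)
    then show ?thesis by (rule f0)
  qed
  have ph: "phi j B k 0 = 0" for j unfolding phi_def by (simp add: E_0)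
  have "eq_step B L f c s k (real n * k) 0 = 0"
    unfolding eq_step_def using fz by (simp add: E_0 ph linear_0[OF Llin])
  then show ?case using Suc.IH[OF nT] by simp
qed

end


lemma csub_subspace: "csubspace_on S \<Longrightarrow> subspace S"
  unfolding subspace_def
proof (intro conjI ballI allI)
  assume a: "csubspace_on S"
  then show "0 \<in> S" unfolding csubspace_on_def by blast
  show "x + y \<in> S" if "x \<in> S" "y \<in> S" for x y using a that unfolding csubspace_on_def by blast
  show "c *\<^sub>R x \<in> S" if "x \<in> S" for c x
  proof -
    have "scaleC (of_real c) x \<in> S" using a that unfolding csubspace_on_def by blast
    then show ?thesis by (simp add: scaleC_of_real)
  qed
qed

lemma clin_add: "clinear_on S f \<Longrightarrow> x \<in> S \<Longrightarrow> y \<in> S \<Longrightarrow> f (x + y) = f x + f y"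
  unfolding clinear_on_def by blast

lemma clin_scaleR: "clinear_on S f \<Longrightarrow> x \<in> S \<Longrightarrow> f (r *\<^sub>R x) = r *\<^sub>R f x"
proof -
  assume "clinear_on S f" "x \<in> S"
  then have "f (scaleC (of_real r) x) = scaleC (of_real r) (f x)" unfolding clinear_on_def by blast
  then show ?thesis by (simp add: scaleC_of_real)
qed

lemma clin_0: "clinear_on S f \<Longrightarrow> f 0 = 0"
proof -
  assume a: "clinear_on S f"
  then have "0 \<in> S" unfolding clinear_on_def csubspace_on_def by blast
  then show "f 0 = 0" using clin_scaleR[OF a, of 0 0] by simp
qed

lemma cnorm_add:
  assumes "is_norm_on S N" "x \<in> S" "y \<in> S" shows "N (x + y) \<le> N x + N y"
proof -
  have "\<forall>x\<in>S. \<forall>y\<in>S. N (x + y) \<le> N x + N y" using assms(1) unfolding is_norm_on_def by (elim conjE) assumption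
  then show ?thesis using assms(2,3) by simp
qed

lemma cnorm_scaleR:
  assumes "is_norm_on S N" "x \<in> S" shows "N (r *\<^sub>R x) = \<bar>r\<bar> * N x"
proof -
  have "\<forall>c::complex. \<forall>x\<in>S. N (scaleC c x) = cmod c * N x" using assms(1) unfolding is_norm_on_def by (elim conjE) assumption
  then have "N (scaleC (of_real r) x) = cmod (of_real r) * N x" using assms(2) by simp
  then show ?thesis by (simp add: scaleC_of_real)
qed

lemma cnorm_pos:
  assumes "is_norm_on S N" "x \<in> S" shows "N x \<ge> 0"
proof -
  have "\<forall>x\<in>S. 0 \<le> N x \<and> (N x = 0 \<longleftrightarrow> x = 0)" using assms(1) unfolding is_norm_on_def by (elim conjE) assumption
  then show ?thesis using assms(2) by simp
qed

lemma cnorm_zero: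
  assumes "is_norm_on S N" "x \<in> S" "N x = 0" shows "x = 0"
proof -
  have "\<forall>x\<in>S. 0 \<le> N x \<and> (N x = 0 \<longleftrightarrow> x = 0)" using assms(1) unfolding is_norm_on_def by (elim conjE) assumption
  then show ?thesis using assms(2,3) by simp
qed

lemma cnorm_sub: "is_norm_on S N \<Longrightarrow> subspace S"
proof -
  assume "is_norm_on S N"
  then have "csubspace_on S" unfolding is_norm_on_def by (elim conjE) assumption
  then show ?thesis by (rule csub_subspace)
qed


lemma perh_inst:
  fixes X0 Xh :: "'x::complex_banach set" and B L :: "'x \<Rightarrow> 'x" and N :: "'x \<Rightarrow> real"
    and U f :: "real \<Rightarrow> 'x" and F :: "nat \<Rightarrow> real \<Rightarrow> 'x"
  assumes Xhc: "csubspace_on Xh" and fin: "finite B0" and Xspan: "Xh \<subseteq> span B0"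
    and nrm: "is_norm_on Xh N"
    and X0c: "csubspace_on X0" and X0Xh: "X0 \<subseteq> Xh"
    and A0: "clinear_on X0 B" and BX0: "B ` X0 \<subseteq> X0"
    and Lbl: "bounded_linear L" and LX0: "range L \<subseteq> X0"
    and C0: "C \<ge> 0" and EB: "\<And>t x. t \<ge> 0 \<Longrightarrow> x \<in> X0 \<Longrightarrow> N (opexp B t x) \<le> C * N x"
    and LB: "\<And>x. N (L x) \<le> C * norm x"
    and UV: "\<And>t. t \<in> {0..T} \<Longrightarrow> U t \<in> X0"
    and Ud: "\<And>t. t \<in> {0..T} \<Longrightarrow> (U has_vector_derivative (B (U t) + L (f t))) (at t within {0..T})"
    and s1: "s \<ge> 1"
    and FD: "\<And>j t. j < s \<Longrightarrow> t \<in> {0..T} \<Longrightarrow> (F j has_vector_derivative F (Suc j) t) (at t within {0..T})"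
    and Ff: "\<And>t. t \<in> {0..T} \<Longrightarrow> F 0 t = f t"
    and MF: "\<And>t. t \<in> {0..T} \<Longrightarrow> norm (F s t) \<le> MF" and MF0: "MF \<ge> 0"
    and cinj: "inj_on c {1..s}" and cr: "c ` {1..s} \<subseteq> {0..1}"
  shows "\<exists>K c'. perh X0 B K Xh N L C c' U f T s c F MF"
proof -
  have sX0: "subspace X0" using X0c by (rule csub_subspace)
  have sXh: "subspace Xh" using Xhc by (rule csub_subspace)
  have X0span: "X0 \<subseteq> span B0" using X0Xh Xspan by blast
  obtain K where K: "K \<ge> 0" "\<forall>x\<in>X0. norm (B x) \<le> K * norm x"
    using fd_linear_bound[OF sX0 fin X0span, of B] clin_add[OF A0] clin_scaleR[OF A0] by blast
  obtain c' where c': "c' \<ge> 0" "\<forall>x\<in>Xh. N x \<le> c' * norm x"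
    using fd_sublinear_bound[OF sXh fin Xspan, of N] cnorm_add[OF nrm] cnorm_scaleR[OF nrm] by blast
  have "perh X0 B K Xh N L C c' U f T s c F MF"
  proof (intro perh.intro opV.intro perh_axioms.intro)
    show "subspace X0" by (rule sX0)
    show "closed X0" by (rule fd_closed[OF sX0 fin X0span])
    show "\<And>x y. x \<in> X0 \<Longrightarrow> y \<in> X0 \<Longrightarrow> B (x + y) = B x + B y" using clin_add[OF A0] .
    show "\<And>r x. x \<in> X0 \<Longrightarrow> B (r *\<^sub>R x) = r *\<^sub>R B x" using clin_scaleR[OF A0] .
    show "\<And>x. x \<in> X0 \<Longrightarrow> B x \<in> X0" using BX0 by blast
    show "0 \<le> K" by (rule K(1))
    show "\<And>x. x \<in> X0 \<Longrightarrow> norm (B x) \<le> K * norm x" using K(2) by blast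
    show "subspace Xh" by (rule sXh)
    show "closed Xh" by (rule fd_closed[OF sXh fin Xspan])
    show "X0 \<subseteq> Xh" by (rule X0Xh)
    show "\<And>x y. x \<in> Xh \<Longrightarrow> y \<in> Xh \<Longrightarrow> N (x + y) \<le> N x + N y" using cnorm_add[OF nrm] .
    show "\<And>r x. x \<in> Xh \<Longrightarrow> N (r *\<^sub>R x) = \<bar>r\<bar> * N x" using cnorm_scaleR[OF nrm] .
    show "\<And>x. x \<in> Xh \<Longrightarrow> N x \<le> c' * norm x" using c'(2) by blast
    show "\<And>x. x \<in> Xh \<Longrightarrow> 0 \<le> N x" using cnorm_pos[OF nrm] .
    show "bounded_linear L" by (rule Lbl)
    show "\<And>x. L x \<in> X0" using LX0 by blast
  qed (use C0 EB LB UV Ud s1 FD Ff MF MF0 cinj cr in auto)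
  then show ?thesis by blast
qed

theorem theorem1:
  fixes A :: "'x::complex_banach \<Rightarrow> 'x"
    and D :: "'x set"
    and bd :: "'x \<Rightarrow> 'y::complex_banach"
    and \<omega> :: real
    and H :: "real set"
    and Xh X0 :: "real \<Rightarrow> 'x set"
    and normh :: "real \<Rightarrow> 'x \<Rightarrow> real"
    and A0h Ah Lh Rh :: "real \<Rightarrow> 'x \<Rightarrow> 'x"
    and Qh :: "real \<Rightarrow> 'y \<Rightarrow> 'x"
    and Z :: "'x set" and normZ :: "'x \<Rightarrow> real"
    and eps :: "real \<Rightarrow> real"
    and T :: real and s :: nat and c :: "nat \<Rightarrow> real"
    and u f :: "real \<Rightarrow> 'x"
    and Uh :: "real \<Rightarrow> real \<Rightarrow> 'x"
  assumes standing: "standing_assumptions A D bd \<omega>"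
    \<comment> \<open>space discretization\<close>
    and H_pos: "H \<subseteq> {0<..}" and H_lim: "0 islimpt H"
    and Xh_fin: "\<forall>h\<in>H. csubspace_on (Xh h) \<and> (\<exists>B. finite B \<and> Xh h \<subseteq> span B)"
    and normh_norm: "\<forall>h\<in>H. is_norm_on (Xh h) (normh h)"
    and X0_sub: "\<forall>h\<in>H. csubspace_on (X0 h) \<and> X0 h \<subseteq> Xh h"
    and A0h_lin: "\<forall>h\<in>H. clinear_on (X0 h) (A0h h) \<and> A0h h ` X0 h \<subseteq> X0 h"
    and Ah_lin: "\<forall>h\<in>H. clinear_on (Xh h) (Ah h)"
    and Lh_proj: "\<forall>h\<in>H. clinear_on UNIV (Lh h) \<and> bounded_linear (Lh h) \<and> range (Lh h) \<subseteq> X0 h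
                      \<and> (\<forall>x. Lh h (Lh h x) = Lh h x)"
    and Qh_lin: "\<forall>h\<in>H. clinear_on UNIV (Qh h) \<and> range (Qh h) \<subseteq> Xh h"
    and Rh_ell: "\<forall>h\<in>H. \<forall>w\<in>D. Rh h w \<in> X0 h
                      \<and> A0h h (Rh h w) + Ah h (Qh h (bd w)) = Lh h (A w)"
    and Z_norm: "is_norm_on Z normZ"
    and eps_mono: "mono_on H eps"
    and Rh_est: "\<forall>h\<in>H. \<forall>v\<in>Z \<inter> D.
        normh h (A0h h (Rh h v - (Lh h v - Lh h (Qh h (bd v))))) \<le> eps h * normZ v"
    and unif_bounds: "\<exists>C. \<forall>h\<in>H.
          (\<forall>t\<ge>0. \<forall>x\<in>X0 h. normh h (opexp (A0h h) t x) \<le> C * normh h x)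
        \<and> (\<forall>x. normh h (Lh h x) \<le> C * norm x)
        \<and> (\<forall>y. normh h (Lh h (Qh h y)) \<le> C * norm y)"
    \<comment> \<open>the quadrature nodes\<close>
    and s_pos: "s \<ge> 1"
    and c_inj: "inj_on c {1..s}" and c_range: "c ` {1..s} \<subseteq> {0..1}"
    \<comment> \<open>the continuous problem with g = 0 and its solution u\<close>
    and T_pos: "T > 0"
    and f_smooth: "Ck_on s T f"
    and u_sol: "\<forall>t\<in>{0..T}. u t \<in> D \<and> bd (u t) = 0
                   \<and> (u has_vector_derivative (A (u t) + f t)) (at t within {0..T})"
    and u_Z: "\<forall>t\<in>{0..T}. u t \<in> Z"
    and u_Z_cont: "\<forall>t\<in>{0..T}. \<forall>e>0. \<exists>d>0. \<forall>r\<in>{0..T}. \<bar>r - t\<bar> < d \<longrightarrow> normZ (u r - u t) < e"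
    \<comment> \<open>the semidiscrete solution\<close>
    and Uh_sol: "\<forall>h\<in>H. Uh h 0 = Lh h (u 0) \<and> (\<forall>t\<in>{0..T}. Uh h t \<in> X0 h
                   \<and> (Uh h has_vector_derivative (A0h h (Uh h t) + Lh h (f t))) (at t within {0..T}))"
  shows
    "(\<exists>C. \<forall>h\<in>H. \<forall>k>0. \<forall>n. real (Suc n) * k \<le> T \<longrightarrow>
        normh h (Uh h (real (Suc n) * k)
                 - eq_step (A0h h) (Lh h) f c s k (real n * k) (Uh h (real n * k))) \<le> C * k ^ (s + 1))
   \<and> (\<exists>C. \<forall>h\<in>H. \<forall>k>0. \<forall>n. real n * k \<le> T \<longrightarrow>
        normh h (Uh h (real n * k) - eq_iter (A0h h) (Lh h) f c s k (Lh h (u 0)) n) \<le> C * k ^ s)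
   \<and> (\<exists>C. \<forall>h\<in>H. \<forall>k>0. \<forall>n. real n * k \<le> T \<longrightarrow>
        normh h (Lh h (u (real n * k)) - eq_iter (A0h h) (Lh h) f c s k (Lh h (u 0)) n)
          \<le> C * (k ^ s + eps h))"
proof -
  obtain Cu where Cu: "\<forall>h\<in>H.
          (\<forall>t\<ge>0. \<forall>x\<in>X0 h. normh h (opexp (A0h h) t x) \<le> Cu * normh h x)
        \<and> (\<forall>x. normh h (Lh h x) \<le> Cu * norm x)
        \<and> (\<forall>y. normh h (Lh h (Qh h y)) \<le> Cu * norm y)" using unif_bounds by blast
  define C where "C = max Cu 0"
  have C0: "C \<ge> 0" unfolding C_def by simp
  obtain F where F0: "\<forall>t\<in>{0..T}. F 0 t = f t"
    and FD: "\<forall>j<s. \<forall>t\<in>{0..T}. (F j has_vector_derivative F (Suc j) t) (at t within {0..T})"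
    and Fc: "continuous_on {0..T} (F s)"
    using f_smooth unfolding Ck_on_def by blast
  obtain MF where MF: "\<And>t. t \<in> {0..T} \<Longrightarrow> norm (F s t) \<le> MF" and MF0: "MF \<ge> 0"
  proof -
    have "continuous_on {0..T} (\<lambda>t. norm (F s t))" using Fc by (intro continuous_intros)
    then obtain t0 where "t0 \<in> {0..T}" "\<forall>t\<in>{0..T}. norm (F s t) \<le> norm (F s t0)"
      using continuous_attains_sup[of "{0..T}" "\<lambda>t. norm (F s t)"] T_pos by auto
    then show ?thesis using that[of "max (norm (F s t0)) 0"] by force
  qed
  have Xh_c: "csubspace_on (Xh h)" and X0_c: "csubspace_on (X0 h)" and X0Xh: "X0 h \<subseteq> Xh h"
    and nrm: "is_norm_on (Xh h) (normh h)" if "h \<in> H" for h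
    using Xh_fin X0_sub normh_norm that by auto
  have inst: "\<exists>K c'. perh (X0 h) (A0h h) K (Xh h) (normh h) (Lh h) C c' (Uh h) f T s c F MF"
    if h: "h \<in> H" for h
  proof -
    obtain B0 where B0: "finite B0" "Xh h \<subseteq> span B0" using Xh_fin h by blast
    show ?thesis
    proof (rule perh_inst[OF Xh_c[OF h] B0 nrm[OF h] X0_c[OF h] X0Xh[OF h]])
      show "clinear_on (X0 h) (A0h h)" "A0h h ` X0 h \<subseteq> X0 h" using A0h_lin h by auto
      show "bounded_linear (Lh h)" "range (Lh h) \<subseteq> X0 h" using Lh_proj h by auto
      show "0 \<le> C" by (rule C0)
      show "normh h (opexp (A0h h) t x) \<le> C * normh h x" if "t \<ge> 0" "x \<in> X0 h" for t x
      proof -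
        have "normh h (opexp (A0h h) t x) \<le> Cu * normh h x" using Cu h that by blast
        also have "\<dots> \<le> C * normh h x" unfolding C_def
          using cnorm_pos[OF nrm[OF h]] X0Xh[OF h] that by (intro mult_right_mono) auto
        finally show ?thesis .
      qed
      show "normh h (Lh h x) \<le> C * norm x" for x
      proof -
        have "normh h (Lh h x) \<le> Cu * norm x" using Cu h by blast
        also have "\<dots> \<le> C * norm x" unfolding C_def by (intro mult_right_mono) auto
        finally show ?thesis .
      qed
      show "\<And>t. t \<in> {0..T} \<Longrightarrow> Uh h t \<in> X0 h"
        "\<And>t. t \<in> {0..T} \<Longrightarrow> (Uh h has_vector_derivative A0h h (Uh h t) + Lh h (f t)) (at t within {0..T})"
        using Uh_sol h by auto
      show "1 \<le> s" by (rule s_pos)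
      show "\<And>j t. j < s \<Longrightarrow> t \<in> {0..T} \<Longrightarrow> (F j has_vector_derivative F (Suc j) t) (at t within {0..T})"
        using FD by blast
      show "\<And>t. t \<in> {0..T} \<Longrightarrow> F 0 t = f t" using F0 by blast
      show "\<And>t. t \<in> {0..T} \<Longrightarrow> norm (F s t) \<le> MF" by (rule MF)
      show "0 \<le> MF" by (rule MF0)
      show "inj_on c {1..s}" "c ` {1..s} \<subseteq> {0..1}" by (rule c_inj, rule c_range)
    qed
  qed
  define Cr where "Cr = C * C * MF * (1 + lagconst c s)"
  have Cr0: "Cr \<ge> 0" unfolding Cr_def lagconst_def using C0 MF0 by (intro mult_nonneg_nonneg add_nonneg_nonneg sum_nonneg) auto
  have P1: "\<forall>h\<in>H. \<forall>k>0. \<forall>n. real (Suc n) * k \<le> T \<longrightarrow>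
        normh h (Uh h (real (Suc n) * k)
                 - eq_step (A0h h) (Lh h) f c s k (real n * k) (Uh h (real n * k))) \<le> Cr * k ^ (s + 1)"
  proof (intro ballI allI impI)
    fix h k n assume h: "h \<in> H" and k: "(k::real) > 0" and nT: "real (Suc n) * k \<le> T"
    obtain K c' where p: "perh (X0 h) (A0h h) K (Xh h) (normh h) (Lh h) C c' (Uh h) f T s c F MF"
      using inst[OF h] by blast
    have "normh h (Uh h (real n * k + k) - eq_step (A0h h) (Lh h) f c s k (real n * k) (Uh h (real n * k))) \<le> Cr * k ^ (s + 1)"
      unfolding Cr_def by (rule perh.rho_bound'[OF p k]) (use k nT in \<open>auto simp: ring_distribs\<close>)
    then show "normh h (Uh h (real (Suc n) * k) - eq_step (A0h h) (Lh h) f c s k (real n * k) (Uh h (real n * k))) \<le> Cr * k ^ (s + 1)"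
      by (simp add: ring_distribs add.commute)
  qed
  have P2': "normh h (Uh h (real n * k) - eq_iter (A0h h) (Lh h) f c s k (Lh h (u 0)) n) \<le> (C * Cr * T) * k ^ s"
    if h: "h \<in> H" and k: "k > 0" and nT: "real n * k \<le> T" for h k n
  proof -
    obtain K c' where p: "perh (X0 h) (A0h h) K (Xh h) (normh h) (Lh h) C c' (Uh h) f T s c F MF"
      using inst[OF h] by blast
    have "Uh h 0 = Lh h (u 0)" using Uh_sol h by blast
    then show ?thesis using perh.err_bound_final'[OF p k _ nT] T_pos unfolding Cr_def by simp
  qed
  show ?thesis
  proof (intro conjI)
    show "\<exists>C. \<forall>h\<in>H. \<forall>k>0. \<forall>n. real (Suc n) * k \<le> T \<longrightarrow>
        normh h (Uh h (real (Suc n) * k)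
                 - eq_step (A0h h) (Lh h) f c s k (real n * k) (Uh h (real n * k))) \<le> C * k ^ (s + 1)"
      using P1 by blast
    show "\<exists>C. \<forall>h\<in>H. \<forall>k>0. \<forall>n. real n * k \<le> T \<longrightarrow>
        normh h (Uh h (real n * k) - eq_iter (A0h h) (Lh h) f c s k (Lh h (u 0)) n) \<le> C * k ^ s"
      using P2' by blast
    show "\<exists>C. \<forall>h\<in>H. \<forall>k>0. \<forall>n. real n * k \<le> T \<longrightarrow>
        normh h (Lh h (u (real n * k)) - eq_iter (A0h h) (Lh h) f c s k (Lh h (u 0)) n)
          \<le> C * (k ^ s + eps h)"
    proof -
      have Zs: "subspace Z" using Z_norm by (rule cnorm_sub)
      have lip: "\<bar>normZ x - normZ y\<bar> \<le> normZ (x - y)" if "x \<in> Z" "y \<in> Z" for x y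
      proof -
        have d1: "x - y \<in> Z" "y - x \<in> Z" using Zs that by (auto intro: subspace_diff)
        have "normZ x = normZ (y + (x - y))" by simp
        also have "\<dots> \<le> normZ y + normZ (x - y)" by (rule cnorm_add[OF Z_norm that(2) d1(1)])
        finally have 1: "normZ x \<le> normZ y + normZ (x - y)" .
        have "normZ y = normZ (x + (y - x))" by simp
        also have "\<dots> \<le> normZ x + normZ (y - x)" by (rule cnorm_add[OF Z_norm that(1) d1(2)])
        also have "normZ (y - x) = normZ ((-1) *\<^sub>R (x - y))" by simp
        also have "\<dots> = normZ (x - y)" using cnorm_scaleR[OF Z_norm d1(1), of "-1"] by simp
        finally have 2: "normZ y \<le> normZ x + normZ (x - y)" .
        show ?thesis using 1 2 by linarith
      qed
      have cz: "continuous_on {0..T} (\<lambda>t. normZ (u t))"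
        unfolding continuous_on_iff
      proof (intro ballI allI impI)
        fix t e assume t: "t \<in> {0..T}" and e: "(e::real) > 0"
        obtain d where d: "d > 0" "\<forall>r\<in>{0..T}. \<bar>r - t\<bar> < d \<longrightarrow> normZ (u r - u t) < e"
          using u_Z_cont t e by blast
        show "\<exists>d>0. \<forall>r\<in>{0..T}. dist r t < d \<longrightarrow> dist (normZ (u r)) (normZ (u t)) < e"
        proof (intro exI[of _ d] conjI ballI impI)
          fix r assume r: "r \<in> {0..T}" "dist r t < d"
          have "dist (normZ (u r)) (normZ (u t)) \<le> normZ (u r - u t)"
            unfolding dist_real_def by (rule lip) (use u_Z r t in auto)
          also have "\<dots> < e" using d r by (auto simp: dist_real_def)
          finally show "dist (normZ (u r)) (normZ (u t)) < e" .
        qed (rule d(1))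
      qed
      obtain Mz where Mz: "\<And>t. t \<in> {0..T} \<Longrightarrow> normZ (u t) \<le> Mz" and Mz0: "Mz \<ge> 0"
      proof -
        obtain t1 where "t1 \<in> {0..T}" "\<forall>t\<in>{0..T}. normZ (u t) \<le> normZ (u t1)"
          using continuous_attains_sup[OF compact_Icc _ cz] T_pos by auto
        then show ?thesis using that[of "max (normZ (u t1)) 0"] by force
      qed
      show ?thesis
      proof (cases "\<exists>v\<in>Z \<inter> D. v \<noteq> 0")
        case True
        then obtain v where v: "v \<in> Z" "v \<in> D" "v \<noteq> 0" by blast
        have nzv: "normZ v > 0"
          using cnorm_pos[OF Z_norm v(1)] cnorm_zero[OF Z_norm v(1)] v(3) by force
        have eps0: "eps h \<ge> 0" if h: "h \<in> H" for h
        proof -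
          obtain K c' where p: "perh (X0 h) (A0h h) K (Xh h) (normh h) (Lh h) C c' (Uh h) f T s c F MF"
            using inst[OF h] by blast
          have R: "Rh h v \<in> X0 h" using Rh_ell h v by blast
          have "A0h h (Rh h v - (Lh h v - Lh h (Qh h (bd v)))) \<in> X0 h"
            using R perh.LV[OF p] by (intro opV.BV[OF perh.axioms(1)[OF p]] opV.Vdiff[OF perh.axioms(1)[OF p]])
          then have "normh h (A0h h (Rh h v - (Lh h v - Lh h (Qh h (bd v))))) \<ge> 0"
            using cnorm_pos[OF nrm[OF h]] X0Xh[OF h] by blast
          moreover have "normh h (A0h h (Rh h v - (Lh h v - Lh h (Qh h (bd v))))) \<le> eps h * normZ v"
            using Rh_est h v by blast
          ultimately have "eps h * normZ v \<ge> 0" by linarith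
          then show ?thesis using nzv by (simp add: zero_le_mult_iff)
        qed
        define C3 where "C3 = C * Mz * T + C * Cr * T"
        show ?thesis
        proof (intro exI[of _ C3] ballI allI impI)
          fix h k n assume h: "h \<in> H" and k: "(k::real) > 0" and nT: "real n * k \<le> T"
          obtain K c' where p: "perh (X0 h) (A0h h) K (Xh h) (normh h) (Lh h) C c' (Uh h) f T s c F MF"
            using inst[OF h] by blast
          define t where "t = real n * k"
          have t: "t \<in> {0..T}" using k nT unfolding t_def by auto
          have Lbl: "bounded_linear (Lh h)" using Lh_proj h by blast
          have Q0: "Qh h 0 = 0" using Qh_lin h clin_0 by blast
          have A0: "Ah h 0 = 0" using Ah_lin h clin_0 by blast
          have a: "normh h (Lh h (u t) - Uh h t) \<le> C * (eps h * Mz) * T"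
          proof (rule perh.proj_err[OF p _ _ _ _ _ t, of u A "Rh h" "eps h" Mz])
            show "\<And>t. t \<in> {0..T} \<Longrightarrow> (u has_vector_derivative A (u t) + f t) (at t within {0..T})"
              using u_sol by blast
            show "Lh h (A (u t)) = A0h h (Rh h (u t))" if "t \<in> {0..T}" for t
            proof -
              have "A0h h (Rh h (u t)) + Ah h (Qh h (bd (u t))) = Lh h (A (u t))"
                using Rh_ell h u_sol that by blast
              then show ?thesis using u_sol that Q0 A0 by simp
            qed
            show "\<And>t. t \<in> {0..T} \<Longrightarrow> Rh h (u t) \<in> X0 h" using Rh_ell h u_sol by blast
            show "normh h (A0h h (Rh h (u t) - Lh h (u t))) \<le> eps h * Mz" if "t \<in> {0..T}" for t
            proof -
              have uZD: "u t \<in> Z \<inter> D" using u_Z u_sol that by blast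
              have "normh h (A0h h (Rh h (u t) - (Lh h (u t) - Lh h (Qh h (bd (u t)))))) \<le> eps h * normZ (u t)"
                using Rh_est h uZD by blast
              moreover have "Lh h (Qh h (bd (u t))) = 0"
                using u_sol that Q0 linear_0[OF bounded_linear.linear[OF Lbl]] by simp
              moreover have "eps h * normZ (u t) \<le> eps h * Mz"
                using eps0[OF h] Mz[OF that] by (intro mult_left_mono) auto
              ultimately show ?thesis by simp
            qed
            show "Uh h 0 = Lh h (u 0)" using Uh_sol h by blast
          qed
          have b: "normh h (Uh h t - eq_iter (A0h h) (Lh h) f c s k (Lh h (u 0)) n) \<le> (C * Cr * T) * k ^ s"
            unfolding t_def by (rule P2'[OF h k nT])
          have Lu: "Lh h (u t) \<in> X0 h" using Lh_proj h by blast
          have Ut: "Uh h t \<in> X0 h" using Uh_sol h t by blast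
          have it: "eq_iter (A0h h) (Lh h) f c s k (Lh h (u 0)) n \<in> X0 h"
            using Lh_proj h by (intro perh.eq_iter_in[OF p k]) blast
          have sXh: "subspace (Xh h)" using nrm[OF h] by (rule cnorm_sub)
          have m1: "Lh h (u t) - Uh h t \<in> Xh h" using Lu Ut X0Xh[OF h] sXh by (blast intro: subspace_diff)
          have m2: "Uh h t - eq_iter (A0h h) (Lh h) f c s k (Lh h (u 0)) n \<in> Xh h"
            using Ut it X0Xh[OF h] sXh by (blast intro: subspace_diff)
          have "normh h (Lh h (u t) - eq_iter (A0h h) (Lh h) f c s k (Lh h (u 0)) n)
              = normh h ((Lh h (u t) - Uh h t) + (Uh h t - eq_iter (A0h h) (Lh h) f c s k (Lh h (u 0)) n))"
            by simp
          also have "\<dots> \<le> normh h (Lh h (u t) - Uh h t) + normh h (Uh h t - eq_iter (A0h h) (Lh h) f c s k (Lh h (u 0)) n)"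
            by (rule cnorm_add[OF nrm[OF h] m1 m2])
          also have "\<dots> \<le> C * (eps h * Mz) * T + (C * Cr * T) * k ^ s" using a b by linarith
          also have "\<dots> \<le> C3 * (k ^ s + eps h)"
          proof -
            have q0: "k ^ s \<ge> 0" using k by simp
            have aa: "C * Mz * T \<ge> 0" using C0 Mz0 T_pos by simp
            have bb: "C * Cr * T \<ge> 0" using C0 Cr0 T_pos by simp
            have "(C * Mz * T) * k ^ s \<ge> 0" using aa q0 by simp
            moreover have "(C * Cr * T) * eps h \<ge> 0" using bb eps0[OF h] by simp
            ultimately show ?thesis unfolding C3_def by (simp add: algebra_simps)
          qed
          finally show "normh h (Lh h (u (real n * k)) - eq_iter (A0h h) (Lh h) f c s k (Lh h (u 0)) n) \<le> C3 * (k ^ s + eps h)"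
            unfolding t_def .
        qed
      next
        case False
        have uz: "u t = 0" if "t \<in> {0..T}" for t using False u_Z u_sol that by blast
        have Alin: "clinear_on D A" using standing unfolding standing_assumptions_def by (rule conjunct1)
        have fz: "f t = 0" if t: "t \<in> {0..T}" for t
        proof -
          have d1: "(u has_vector_derivative (A (u t) + f t)) (at t within {0..T})" using u_sol t by blast
          have "(u has_vector_derivative 0) (at t within {0..T})"
            by (rule has_vector_derivative_transform_within[OF has_vector_derivative_const zero_less_one t])
               (use uz in simp)
          then have "A (u t) + f t = 0"
            using vector_derivative_unique_within_closed_interval[of 0 T t u "A (u t) + f t" 0] d1 T_pos t by simp
          then show ?thesis using uz[OF t] clin_0[OF Alin] by simp
        qed
        show ?thesis
        proof (intro exI[of _ 0] ballI allI impI)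
          fix h k n assume h: "h \<in> H" and k: "(k::real) > 0" and nT: "real n * k \<le> T"
          obtain K c' where p: "perh (X0 h) (A0h h) K (Xh h) (normh h) (Lh h) C c' (Uh h) f T s c F MF"
            using inst[OF h] by blast
          have Lbl: "bounded_linear (Lh h)" using Lh_proj h by blast
          have L0: "Lh h 0 = 0" by (rule linear_0[OF bounded_linear.linear[OF Lbl]])
          have "u (real n * k) = 0" using k nT by (intro uz) auto
          moreover have "u 0 = 0" using T_pos by (intro uz) auto
          moreover have "eq_iter (A0h h) (Lh h) f c s k 0 n = 0"
            by (rule perh.eq_iter_zero[OF p fz k nT])
          ultimately show "normh h (Lh h (u (real n * k)) - eq_iter (A0h h) (Lh h) f c s k (Lh h (u 0)) n) \<le> 0 * (k ^ s + eps h)"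
            using L0 perh.N0[OF p] by simp
        qed
      qed
    qed
  qed
qed


end
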